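(* Let $1\le k<n$, $n>2$, $(R,r)$ a hypothesis and $(\kappa,M,p)$ satisfy Assumption (A). Let $(y,X)\in\mathbb{R}^n\times\mathfrak{X}_0$ and $t\ge k$ be such that: (A1) $\hat V_X(y)$ has exactly $t+1$ nonzero columns, with indices $1=j_1<j_2<\dots<j_{t+1}\le n$; (A2) $j_{i+1}-j_i\ge p+1$ for $i=1,\dots,t$, and $n-j_{t+1}\ge p-1$; (A3) if $t=k$ then $\operatorname{rank}\hat V_X(y)=k$; otherwise $\operatorname{span}\{[\hat V_X(y)]_{\cdot j_i}:i=1,\dots,t\}=\operatorname{span}\{[\hat V_X(y)]_{\cdot j_i}:i=2,\dots,t+1\}=\mathbb{R}^k$. Then: 1. $\hat A^{(p)}_X(y)$ is defined and equals $0$. 2. $y\notin N^*(\hat\Omega_{\kappa,M,p,X})$ under each of: (CKV) $M\in\mathbb{M}_{KV}$; (CAM) $M\in\mathbb{M}_{AM}$ and every row of the matrix obtained from $\hat Z_X(y)$ by deleting its last column is nonzero (this holds in particular if $n-j_{t+1}>p-1$); (CNW) $M\in\mathbb{M}_{NW}$ and either all coordinates of $\omega'\hat Z_X(y)$ are nonnegative or all are nonpositive ($\omega$ the weights vector of $M$). 3. For every $Q\in\mathbb{R}^{k\times k}$ with $\operatorname{rank}Q=k$, $(y,XQ)\in\mathbb{R}^n\times\mathfrak{X}_0$ satisfies (A1), (A2), (A3). 4. If $k\ge2$ and either $[\hat V_X(y)]_{1j_i}>0$ for all $i=2,\dots,t+1$ or $[\hat V_X(y)]_{1j_i}<0$ for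 all $i=2,\dots,t+1$, then there is a regular $Q\in\mathbb{R}^{k\times k}$ such that $X$ and $XQ$ have the same first column and $y\notin N^*(\hat\Omega_{\kappa,M,p,XQ})$.
   Context: Let $n>2$, $1\le k<n$, $\mathfrak{X}_0=\{X\in\mathbb{R}^{n\times k}:\operatorname{rank}X=k\}$. For $X\in\mathfrak{X}_0$: $\hat\beta_X(y)=(X'X)^{-1}X'y$, $\hat u_X(y)=y-X\hat\beta_X(y)$. Hypothesis $(R,r)$: $R\in\mathbb{R}^{q\times k}$ of rank $q\ge1$, $r\in\mathbb{R}^q$. $[A]_{ij}$, $[A]_{\cdot j}$ denote entries and columns. Estimator $\hat\Omega_{\kappa,M,p,X}$ at $y$: $\hat V_X(y)=X'\operatorname{diag}(\hat u_X(y))\in\mathbb{R}^{k\times n}$ with columns $\hat V_{\cdot j}$; $\hat V_p=(\hat V_{\cdot(p+1)},\dots,\hat V_{\cdot n})$; $\hat V_1\in\mathbb{R}^{kp\times(n-p)}$ with $j$-th column $(\hat V_{\cdot(j+p-1)}',\dots,\hat V_{\cdot j}')'$. If $\hat V_1\hat V_1'$ invertible: $\hat A^{(p)}_X(y)=(\hat A_1,\dots,\hat A_p)=\hat V_p\hat V_1'(\hat V_1\hat V_1')^{-1}$, $\hat Z_X(y)=\hat V_p-\hat A^{(p)}\hat V_1\in\mathbb{R}^{k\times(n-p)}$; $\check\Gamma_i=(n-p)^{-1}\sum_{j=i+1}^{n-p}\hat Z_{\cdot j}\hat Z_{\cdot(j-i)}'$, $\check\Gamma_{-i}=\check\Gamma_i'$;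 $\check\Psi=\sum_{|i|\le n-p-1}\kappa(i/M(y))\check\Gamma_i$ (if $M(y)=0$: weight $1$ at $i=0$, else $0$). If $I_k-\sum_l\hat A_l$ invertible with inverse $F$: $\hat\Omega_{\kappa,M,p,X}(y)=nR(X'X)^{-1}F\check\Psi F'(X'X)^{-1}R'$; undefined otherwise or if $M(y)$ undefined. $N^*(\hat\Omega)$: set of $y$ where $\hat\Omega(y)$ is undefined or singular. Bandwidths (undefined if $\hat Z(y)$ undefined or a denominator vanishes; tuning constants independent of $y$ and $X$; weights vector $\omega\in\mathbb{R}^k\setminus\{0\}$, entries $\ge0$). $\mathbb{M}_{AM}$: $\hat\rho_i=\sum_{j=2}^{n-p}\hat Z_{ij}\hat Z_{i(j-1)}/\sum_{j=1}^{n-p-1}\hat Z_{ij}^2$, $\hat\sigma_i^2=(n-p-1)^{-1}\sum_{j=2}^{n-p}(\hat Z_{ij}-\hat\rho_i\hat Z_{i(j-1)})^2$, $\hat\alpha_1=\sum_i\omega_i\frac{4\hat\rho_i^2\hat\sigma_i^4}{(1-\hat\rho_i)^6(1+\hat\rho_i)^2}/\sum_i\omega_i\frac{\hat\sigma_i^4}{(1-\hat\rho_i)^4}$, $\hat\alpha_2=\sum_i\omega_i\frac{4\hat\rho_i^2\hat\sigma_i^4}{(1-\hat\rho_i)^8}/\sum_i\omega_i\frac{\hat\sigma_i^4}{(1-\hat\rho_i)^4}$, $M=c_1(\hat\alpha_jn)^{c_2}$, $c_1,c_2>0$, $j\in\{1,2\}$. $\mathbb{M}_{NW}$: $w(i)\ge0$,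 $w(0)=1$, $\bar\sigma_i=\omega'\check\Gamma_{|i|}\omega$, $M=\bar c_2([\sum_i|i|^{\bar c_1}w(i)\bar\sigma_i/\sum_iw(i)\bar\sigma_i]^2n)^{\bar c_3}$, $\bar c_1\in\mathbb{N}$, $\bar c_2,\bar c_3>0$. $\mathbb{M}_{KV}$: constants $M>0$. Assumption (A): (i) $\kappa$ even, continuous, $\kappa(0)=1$, $\kappa(x)\to0$ as $x\to\infty$, $(\kappa((i-j)/s))_{i,j=1}^J$ positive definite for all $s>0$, $J\in\mathbb{N}$; (ii) $M\in\mathbb{M}_{AM}\cup\mathbb{M}_{NW}\cup\mathbb{M}_{KV}$; (iii) $p\in\mathbb{Z}$, $1\le p\le n/(k+1)$. *)

theory Defs
  imports "HOL-Analysis.Analysis" "Jordan_Normal_Form.DL_Rank"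
begin

text \<open>Matrices are Jordan_Normal_Form matrices (real mat), vectors are real vec.
  All indices are 0-based: the paper's column j (1-based) is column j-1 here.\<close>

abbreviation mrank :: "nat \<Rightarrow> real mat \<Rightarrow> nat" where
  "mrank m A \<equiv> vec_space.rank m A"

abbreviation vspan :: "nat \<Rightarrow> real vec set \<Rightarrow> real vec set" where
  "vspan m S \<equiv> LinearCombinations.module.span class_ring (module_vec TYPE(real) m) S"

definition minv :: "real mat \<Rightarrow> real mat" where
  "minv A = (SOME B. inverts_mat A B \<and> inverts_mat B A)"

definition design0 :: "nat \<Rightarrow> nat \<Rightarrow> real mat set" where
  "design0 n k = {X. X \<in> carrier_mat n k \<and> mrank n X = k}"

definition uhat :: "real mat \<Rightarrow> real vec \<Rightarrow> real vec" where
  "uhat X y = y - X *\<^sub>v (minv (transpose_mat X * X) *\<^sub>v (transpose_mat X *\<^sub>v y))"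

definition Vhat :: "real mat \<Rightarrow> real vec \<Rightarrow> real mat" where
  "Vhat X y = transpose_mat X * mat_diag (dim_vec y) (\<lambda>j. uhat X y $ j)"

definition Vp_mat :: "nat \<Rightarrow> real mat \<Rightarrow> real mat" where
  "Vp_mat p V = mat (dim_row V) (dim_col V - p) (\<lambda>(r, j). V $$ (r, j + p))"

text \<open>\<open>V_1\<close>: (kp) x (n-p); its (0-based) column j is the stack of the columns
  j+p-1, j+p-2, ..., j of V (paper: \<open>(V_{j+p-1}',...,V_j')'\<close> for 1-based j).\<close>
definition V1_mat :: "nat \<Rightarrow> real mat \<Rightarrow> real mat" where
  "V1_mat p V = mat (dim_row V * p) (dim_col V - p)
     (\<lambda>(i, j). V $$ (i mod dim_row V, j + p - 1 - i div dim_row V))"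

definition Ahat :: "nat \<Rightarrow> real mat \<Rightarrow> real vec \<Rightarrow> real mat option" where
  "Ahat p X y = (let V = Vhat X y; V1 = V1_mat p V in
     if invertible_mat (V1 * transpose_mat V1)
     then Some (Vp_mat p V * transpose_mat V1 * minv (V1 * transpose_mat V1))
     else None)"

definition Zhat :: "nat \<Rightarrow> real mat \<Rightarrow> real vec \<Rightarrow> real mat option" where
  "Zhat p X y = map_option (\<lambda>A. Vp_mat p (Vhat X y) - A * V1_mat p (Vhat X y)) (Ahat p X y)"

definition Gam :: "real mat \<Rightarrow> int \<Rightarrow> real mat" where
  "Gam Z i = mat (dim_row Z) (dim_row Z) (\<lambda>(a, b).
     if 0 \<le> i then
       (1 / real (dim_col Z)) * (\<Sum>j\<in>{nat i..<dim_col Z}. Z $$ (a, j) * Z $$ (b, j - nat i))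
     else
       (1 / real (dim_col Z)) * (\<Sum>j\<in>{nat (- i)..<dim_col Z}. Z $$ (b, j) * Z $$ (a, j - nat (- i))))"

definition kw :: "(real \<Rightarrow> real) \<Rightarrow> real \<Rightarrow> int \<Rightarrow> real" where
  "kw \<kappa> M i = (if M = 0 then (if i = 0 then 1 else 0) else \<kappa> (real_of_int i / M))"

definition Psi :: "(real \<Rightarrow> real) \<Rightarrow> real \<Rightarrow> real mat \<Rightarrow> real mat" where
  "Psi \<kappa> M Z = mat (dim_row Z) (dim_row Z) (\<lambda>(a, b).
     \<Sum>i\<in>{- (int (dim_col Z) - 1) .. int (dim_col Z) - 1}. kw \<kappa> M i * Gam Z i $$ (a, b))"

definition sumA :: "nat \<Rightarrow> real mat \<Rightarrow> real mat" where
  "sumA p A = mat (dim_row A) (dim_row A) (\<lambda>(a, b). \<Sum>l<p. A $$ (a, l * dim_row A + b))"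

text \<open>KV: constant M. AM: weights \<omega>, constants c1 c2, selector j \<in> {1,2}.
  NW: weight function w, weights \<omega>, constants \<open>c1\<close> (natural), \<open>c2\<close>, \<open>c3\<close>.\<close>
datatype bandwidth =
    BW_KV real
  | BW_AM "real vec" real real nat
  | BW_NW "int \<Rightarrow> real" "real vec" nat real real

definition weights_ok :: "nat \<Rightarrow> real vec \<Rightarrow> bool" where
  "weights_ok k \<omega> \<longleftrightarrow> \<omega> \<in> carrier_vec k \<and> \<omega> \<noteq> 0\<^sub>v k \<and> (\<forall>i<k. 0 \<le> \<omega> $ i)"

fun bw_ok :: "nat \<Rightarrow> bandwidth \<Rightarrow> bool" where
  "bw_ok k (BW_KV c) \<longleftrightarrow> 0 < c"
| "bw_ok k (BW_AM \<omega> c1 c2 j) \<longleftrightarrow> weights_ok k \<omega> \<and> 0 < c1 \<and> 0 < c2 \<and> j \<in> {1, 2}"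
| "bw_ok k (BW_NW w \<omega> c1 c2 c3) \<longleftrightarrow> (\<forall>i. 0 \<le> w i) \<and> w 0 = 1 \<and> weights_ok k \<omega> \<and> 0 < c2 \<and> 0 < c3"

definition rho_den :: "real mat \<Rightarrow> nat \<Rightarrow> real" where
  "rho_den Z i = (\<Sum>j\<in>{0..<dim_col Z - 1}. (Z $$ (i, j))\<^sup>2)"

definition rho :: "real mat \<Rightarrow> nat \<Rightarrow> real" where
  "rho Z i = (\<Sum>j\<in>{1..<dim_col Z}. Z $$ (i, j) * Z $$ (i, j - 1)) / rho_den Z i"

definition sig2 :: "real mat \<Rightarrow> nat \<Rightarrow> real" where
  "sig2 Z i = (1 / (real (dim_col Z) - 1)) *
     (\<Sum>j\<in>{1..<dim_col Z}. (Z $$ (i, j) - rho Z i * Z $$ (i, j - 1))\<^sup>2)"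

text \<open>Value of the bandwidth at a given \<open>Z_X(y)\<close> (sample size n); None = undefined.\<close>
fun bw_val :: "bandwidth \<Rightarrow> nat \<Rightarrow> real mat \<Rightarrow> real option" where
  "bw_val (BW_KV c) n Z = Some c"
| "bw_val (BW_AM \<omega> c1 c2 jsel) n Z =
    (let k = dim_row Z;
         den = (\<Sum>i<k. \<omega> $ i * (sig2 Z i)\<^sup>2 / (1 - rho Z i) ^ 4);
         num1 = (\<Sum>i<k. \<omega> $ i * (4 * (rho Z i)\<^sup>2 * (sig2 Z i)\<^sup>2 / ((1 - rho Z i) ^ 6 * (1 + rho Z i) ^ 2)));
         num2 = (\<Sum>i<k. \<omega> $ i * (4 * (rho Z i)\<^sup>2 * (sig2 Z i)\<^sup>2 / (1 - rho Z i) ^ 8));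
         \<alpha> = (if jsel = 1 then num1 / den else num2 / den)
     in if (\<forall>i<k. rho_den Z i \<noteq> 0 \<and> rho Z i \<noteq> 1 \<and> (jsel = 1 \<longrightarrow> rho Z i \<noteq> -1)) \<and> den \<noteq> 0
        then Some (c1 * (\<alpha> * real n) powr c2) else None)"
| "bw_val (BW_NW w \<omega> c1 c2 c3) n Z =
    (let m = int (dim_col Z);
         sb = (\<lambda>i. \<omega> \<bullet> (Gam Z \<bar>i\<bar> *\<^sub>v \<omega>));
         num = (\<Sum>i\<in>{- (m - 1) .. m - 1}. real_of_int (\<bar>i\<bar> ^ c1) * w i * sb i);
         den = (\<Sum>i\<in>{- (m - 1) .. m - 1}. w i * sb i)
     in if den \<noteq> 0 then Some (c2 * ((num / den)\<^sup>2 * real n) powr c3) else None)"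

definition Omega_hat :: "(real \<Rightarrow> real) \<Rightarrow> bandwidth \<Rightarrow> nat \<Rightarrow> real mat \<Rightarrow> real mat \<Rightarrow> real vec
    \<Rightarrow> real mat option" where
  "Omega_hat \<kappa> b p R X y =
    (case Ahat p X y of None \<Rightarrow> None | Some A \<Rightarrow>
      (let n = dim_vec y; k = dim_col X; V = Vhat X y;
           Z = Vp_mat p V - A * V1_mat p V;
           S = 1\<^sub>m k - sumA p A
       in case bw_val b n Z of None \<Rightarrow> None | Some M \<Rightarrow>
          (if invertible_mat S then
             (let F = minv S; G = minv (transpose_mat X * X) in
              Some (real n \<cdot>\<^sub>m (R * G * F * Psi \<kappa> M Z * transpose_mat F * G * transpose_mat R)))
           else None)))"

definition Nstar :: "(real \<Rightarrow> real) \<Rightarrow> bandwidth \<Rightarrow> nat \<Rightarrow> real mat \<Rightarrow> real mat \<Rightarrow> real vec set" where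
  "Nstar \<kappa> b p R X = {y \<in> carrier_vec (dim_row X).
     Omega_hat \<kappa> b p R X y = None \<or> (\<exists>Om. Omega_hat \<kappa> b p R X y = Some Om \<and> \<not> invertible_mat Om)}"

definition kernel_ok :: "(real \<Rightarrow> real) \<Rightarrow> bool" where
  "kernel_ok \<kappa> \<longleftrightarrow> (\<forall>x. \<kappa> (- x) = \<kappa> x) \<and> continuous_on UNIV \<kappa> \<and> \<kappa> 0 = 1 \<and>
     (\<kappa> \<longlongrightarrow> 0) at_top \<and>
     (\<forall>s>0. \<forall>J::nat. \<forall>x::nat \<Rightarrow> real. (\<exists>i<J. x i \<noteq> 0) \<longrightarrow>
        0 < (\<Sum>i<J. \<Sum>j<J. x i * x j * \<kappa> ((real i - real j) / s)))"

definition assumptionA :: "nat \<Rightarrow> nat \<Rightarrow> (real \<Rightarrow> real) \<Rightarrow> bandwidth \<Rightarrow> nat \<Rightarrow> bool" where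
  "assumptionA n k \<kappa> b p \<longleftrightarrow> kernel_ok \<kappa> \<and> bw_ok k b \<and> 1 \<le> p \<and> real p \<le> real n / real (k + 1)"

text \<open>js i (i = 0..t) is the 0-based index of the paper's \<open>j_{i+1}\<close>.\<close>
definition condA :: "nat \<Rightarrow> real mat \<Rightarrow> real vec \<Rightarrow> nat \<Rightarrow> (nat \<Rightarrow> nat) \<Rightarrow> bool" where
  "condA p X y t js \<longleftrightarrow>
    (let V = Vhat X y; n = dim_vec y; k = dim_col X in
      \<comment> \<open>(A1)\<close>
      strict_mono_on {..t} js \<and> js 0 = 0 \<and> js t < n \<and>
      {j. j < n \<and> col V j \<noteq> 0\<^sub>v k} = js ` {..t} \<and>
      \<comment> \<open>(A2)\<close>
      (\<forall>i<t. p + 1 \<le> js (Suc i) - js i) \<and> int p - 1 \<le> int n - int (js t + 1) \<and>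
      \<comment> \<open>(A3)\<close>
      (if t = k then mrank k V = k
       else vspan k ((\<lambda>i. col V (js i)) ` {..<t}) = carrier_vec k \<and>
            vspan k ((\<lambda>i. col V (js i)) ` {1..t}) = carrier_vec k))"

end

theory Submission imports Defs begin

no_notation inner (infix \<open>\<bullet>\<close> 70)

lemma mult_zero_vec[simp]:
  fixes A :: "'a :: semiring_0 mat"
  assumes "A \<in> carrier_mat nr n"
  shows "A *\<^sub>v 0\<^sub>v n = 0\<^sub>v nr"
  by (rule eq_vecI, insert assms, auto)

lemma minv_props:
  fixes A :: "real mat"
  assumes A: "A \<in> carrier_mat n n" and inv: "invertible_mat A"
  shows "minv A \<in> carrier_mat n n \<and> A * minv A = 1\<^sub>m n \<and> minv A * A = 1\<^sub>m n"
proof -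
  have ex: "\<exists>B. inverts_mat A B \<and> inverts_mat B A" using inv unfolding invertible_mat_def by blast
  hence h: "inverts_mat A (minv A) \<and> inverts_mat (minv A) A" unfolding minv_def by (rule someI_ex)
  have 1: "A * minv A = 1\<^sub>m n" using h A unfolding inverts_mat_def by auto
  have 2: "minv A * A = 1\<^sub>m (dim_row (minv A))" using h unfolding inverts_mat_def by auto
  have c: "dim_col (minv A) = n" using arg_cong[OF 1, of dim_col] by simp
  have r: "dim_row (minv A) = n" using arg_cong[OF 2, of dim_col] A by simp
  show ?thesis using 1 2 c r by auto
qed

lemma minv_unique:
  fixes A B :: "real mat"
  assumes A: "A \<in> carrier_mat n n" and B: "B \<in> carrier_mat n n"
    and AB: "A * B = 1\<^sub>m n" and BA: "B * A = 1\<^sub>m n"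
  shows "minv A = B"
proof -
  have inv: "invertible_mat A" unfolding invertible_mat_def inverts_mat_def square_mat.simps
    using A B AB BA by auto
  from minv_props[OF A inv] have C: "minv A \<in> carrier_mat n n" and CA: "minv A * A = 1\<^sub>m n" by auto
  have "minv A = minv A * (A * B)" using AB C by simp
  also have "\<dots> = (minv A * A) * B" using C A B by simp
  also have "\<dots> = B" using CA B by simp
  finally show ?thesis .
qed

lemma inj_imp_invertible:
  fixes A :: "real mat"
  assumes A: "A \<in> carrier_mat n n" and inj: "\<forall>v\<in>carrier_vec n. A *\<^sub>v v = 0\<^sub>v n \<longrightarrow> v = 0\<^sub>v n"
  shows "invertible_mat A"
proof -
  have "det A \<noteq> 0" using det_0_iff_vec_prod_zero_field[OF A] inj by blast
  from det_non_zero_imp_unit[OF A this, of "()"]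
  obtain B where B: "B \<in> carrier_mat n n" "B * A = 1\<^sub>m n" "A * B = 1\<^sub>m n"
    unfolding Units_def ring_mat_def by auto
  thus ?thesis unfolding invertible_mat_def inverts_mat_def square_mat.simps using A by auto
qed

lemma invertible_inj:
  fixes A :: "real mat"
  assumes A: "A \<in> carrier_mat n n" and inv: "invertible_mat A" and v: "v \<in> carrier_vec n"
    and Av: "A *\<^sub>v v = 0\<^sub>v n"
  shows "v = 0\<^sub>v n"
proof -
  from minv_props[OF A inv] have C: "minv A \<in> carrier_mat n n" and CA: "minv A * A = 1\<^sub>m n" by auto
  have "v = (minv A * A) *\<^sub>v v" using CA v by simp
  also have "\<dots> = minv A *\<^sub>v (A *\<^sub>v v)" using C A v by simp
  also have "\<dots> = 0\<^sub>v n" using Av C by simp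
  finally show ?thesis .
qed

lemma self_scalar_zero:
  fixes v :: "real vec"
  assumes "v \<bullet> v = 0"
  shows "v = 0\<^sub>v (dim_vec v)"
proof -
  have "(\<Sum>i\<in>{0..<dim_vec v}. v $ i * v $ i) = 0" using assms unfolding scalar_prod_def by simp
  hence "\<forall>i\<in>{0..<dim_vec v}. v $ i * v $ i = 0"
    by (subst sum_nonneg_eq_0_iff[symmetric]) auto
  thus ?thesis by (intro eq_vecI) auto
qed

lemma self_scalar_pos:
  fixes v :: "real vec"
  assumes "v \<noteq> 0\<^sub>v (dim_vec v)"
  shows "v \<bullet> v > 0"
proof -
  have "v \<bullet> v \<ge> 0" unfolding scalar_prod_def by (intro sum_nonneg) auto
  thus ?thesis using self_scalar_zero assms by force
qed

lemma gram_inj: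
  fixes A :: "real mat"
  assumes A: "A \<in> carrier_mat nr nc" and x: "x \<in> carrier_vec nr"
    and z: "(A * transpose_mat A) *\<^sub>v x = 0\<^sub>v nr"
  shows "transpose_mat A *\<^sub>v x = 0\<^sub>v nc"
proof -
  let ?w = "transpose_mat A *\<^sub>v x"
  have w: "?w \<in> carrier_vec nc" using A x by auto
  have "(A * transpose_mat A) *\<^sub>v x = A *\<^sub>v ?w" using A x by auto
  hence "x \<bullet> (A *\<^sub>v ?w) = 0" using z x by (metis scalar_prod_right_zero)
  moreover have "?w \<bullet> ?w = x \<bullet> (A *\<^sub>v ?w)" by (rule transpose_vec_mult_scalar[OF A w x])
  ultimately have "?w \<bullet> ?w = 0" by simp
  from self_scalar_zero[OF this] show ?thesis using w A by simp
qed

lemma mult_unit_vec_col: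
  fixes X :: "real mat"
  assumes X: "X \<in> carrier_mat n k" and i: "i < k"
  shows "X *\<^sub>v unit_vec k i = col X i"
  by (rule eq_vecI, insert X i, auto)

lemma rank_tall_inj:
  fixes X :: "real mat"
  assumes X: "X \<in> carrier_mat n k" and rk: "mrank n X = k"
    and v: "v \<in> carrier_vec k" and Xv: "X *\<^sub>v v = 0\<^sub>v n"
  shows "v = 0\<^sub>v k"
proof (rule ccontr)
  assume nz: "v \<noteq> 0\<^sub>v k"
  interpret vs: vec_space "TYPE(real)" n .
  show False
  proof (cases "distinct (cols X)")
    case True
    have "vs.lin_indpt (set (cols X))" using vs.full_rank_lin_indpt[OF X rk True] .
    moreover have "vs.lin_dep (set (cols X))" using vs.lin_depI[OF X v nz Xv True] .
    ultimately show False by blast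
  next
    case False
    obtain S where S: "maximal S (\<lambda>T. T \<subseteq> set (cols X) \<and> vs.lin_indpt T)"
      using maximal_exists[of "(\<lambda>T. T \<subseteq> set (cols X) \<and> vs.lin_indpt T)" "card (set (cols X))" "{}"]
      by (meson List.finite_set card_mono empty_iff empty_subsetI vs.finite_lin_indpt2 rev_finite_subset)
    then have "card S \<le> card (set (cols X))" by (simp add: card_mono maximal_def)
    also have "card (set (cols X)) < length (cols X)" using False card_distinct
      by (metis card_length order_le_less)
    also have "\<dots> = k" using X by simp
    finally have "card S < k" .
    moreover have "mrank n X = card S" using vs.rank_card_indpt[OF X S] .
    ultimately show False using rk by simp
  qed
qed

lemma inj_rank_tall:
  fixes X :: "real mat"
  assumes X: "X \<in> carrier_mat n k"
    and inj: "\<forall>v\<in>carrier_vec k. X *\<^sub>v v = 0\<^sub>v n \<longrightarrow> v = 0\<^sub>v k"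
  shows "mrank n X = k"
proof -
  interpret vs: vec_space "TYPE(real)" n .
  have dist: "distinct (cols X)"
  proof (rule ccontr)
    assume "\<not> distinct (cols X)"
    then obtain i j where ij: "i \<noteq> j" "i < k" "j < k" "cols X ! i = cols X ! j"
      using X by (auto simp: distinct_conv_nth)
    hence cij: "col X i = col X j" using X by simp
    let ?v = "unit_vec k i - unit_vec k j :: real vec"
    have vc: "?v \<in> carrier_vec k" by simp
    have "X *\<^sub>v ?v = X *\<^sub>v unit_vec k i - X *\<^sub>v unit_vec k j"
      using X by (simp add: mult_minus_distrib_mat_vec)
    also have "\<dots> = 0\<^sub>v n" using cij mult_unit_vec_col[OF X] ij X by simp
    finally have Xv: "X *\<^sub>v ?v = 0\<^sub>v n" .
    have "?v = 0\<^sub>v k" using inj vc Xv by auto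
    hence "?v $ i = 0" using ij(2) by simp
    thus False using ij by simp
  qed
  have "vs.lin_indpt (set (cols X))"
  proof
    assume "vs.lin_dep (set (cols X))"
    from vs.lin_depE[OF X this dist] obtain v where "v \<in> carrier_vec k" "v \<noteq> 0\<^sub>v k" "X *\<^sub>v v = 0\<^sub>v n"
      by blast
    thus False using inj by blast
  qed
  thus ?thesis using vs.lin_indpt_full_rank[OF X dist] by blast
qed

lemma rank_wide_span:
  fixes V :: "real mat"
  assumes V: "V \<in> carrier_mat k n" and rk: "mrank k V = k"
  shows "vspan k (set (cols V)) = carrier_vec k"
proof -
  interpret vs: vec_space "TYPE(real)" k .
  obtain U where U: "maximal U (\<lambda>T. T \<subseteq> set (cols V) \<and> vs.lin_indpt T)"
    using maximal_exists[of "(\<lambda>T. T \<subseteq> set (cols V) \<and> vs.lin_indpt T)" "card (set (cols V))" "{}"]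
    by (meson List.finite_set card_mono empty_iff empty_subsetI vs.finite_lin_indpt2 rev_finite_subset)
  have cU: "card U = k" using vs.rank_card_indpt[OF V U] rk by simp
  have Usub: "U \<subseteq> set (cols V)" and li: "vs.lin_indpt U" using U unfolding maximal_def by auto
  have colsc: "set (cols V) \<subseteq> carrier_vec k" using V cols_dim[of V] by auto
  have Uc: "U \<subseteq> carrier_vec k" using Usub colsc by auto
  have fU: "finite U" using Usub finite_subset by blast
  have "vs.basis U" using vs.dim_li_is_basis[OF vs.fin_dim fU _ li] Uc cU vs.dim_is_n by simp
  hence spU: "vs.span U = carrier_vec k" unfolding vs.basis_def by simp
  have "vs.span U \<subseteq> vs.span (set (cols V))" by (rule vs.span_is_monotone[OF Usub])
  moreover have "vs.span (set (cols V)) \<subseteq> carrier_vec k" using vs.span_is_subset2 colsc by simp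
  ultimately show ?thesis using spU by blast
qed

lemma span_wide_rank:
  fixes V :: "real mat"
  assumes V: "V \<in> carrier_mat k n" and sp: "vspan k (set (cols V)) = carrier_vec k"
  shows "mrank k V = k"
proof -
  interpret vs: vec_space "TYPE(real)" k .
  have "vs.rank V = vectorspace.dim class_ring (module_vec TYPE(real) k\<lparr>carrier := carrier_vec k\<rparr>)"
    unfolding vs.rank_def using sp by simp
  also have "module_vec TYPE(real) k\<lparr>carrier := carrier_vec k\<rparr> = module_vec TYPE(real) k"
    unfolding module_vec_def by simp
  also have "vectorspace.dim class_ring (module_vec TYPE(real) k) = k" using vs.dim_is_n .
  finally show ?thesis .
qed

lemma span_surj:
  fixes A :: "real mat"
  assumes A: "A \<in> carrier_mat k nc"
  shows "vspan k (set (cols A)) = carrier_vec k \<longleftrightarrow> (\<forall>w\<in>carrier_vec k. \<exists>x\<in>carrier_vec nc. A *\<^sub>v x = w)"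
proof -
  interpret vs: vec_space "TYPE(real)" k .
  have "vs.span (set (cols A)) = {y\<in>carrier_vec k. \<exists>x\<in>carrier_vec nc. A *\<^sub>v x = y}"
    using vs.col_space_eq[OF A] A unfolding vs.col_space_def by simp
  thus ?thesis by auto
qed

lemma span_orth:
  fixes S :: "real vec set"
  assumes S: "S \<subseteq> carrier_vec k" and sp: "vspan k S = carrier_vec k"
    and x: "x \<in> carrier_vec k" and orth: "\<forall>v\<in>S. v \<bullet> x = 0"
  shows "x = 0\<^sub>v k"
proof -
  interpret vs: vec_space "TYPE(real)" k .
  have "x \<in> vs.orthogonal_complement S" unfolding vs.orthogonal_complement_def
    using x orth S comm_scalar_prod[OF x] by auto
  hence "x \<in> vs.orthogonal_complement (vs.span S)" using vs.in_orthogonal_complement_span[OF S] by simp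
  hence "x \<bullet> x = 0" unfolding vs.orthogonal_complement_def using sp x by simp
  from self_scalar_zero[OF this] show ?thesis using x by simp
qed

lemma cols_mult_image:
  fixes A B :: "real mat"
  assumes A: "A \<in> carrier_mat k nc" and B: "B \<in> carrier_mat k k"
  shows "set (cols (B * A)) = (\<lambda>v. B *\<^sub>v v) ` set (cols A)"
proof -
  have "set (cols (B * A)) = (\<lambda>j. col (B * A) j) ` {0..<nc}" unfolding cols_def using A B by simp
  also have "\<dots> = (\<lambda>j. B *\<^sub>v col A j) ` {0..<nc}" using A B by (intro image_cong) auto
  also have "\<dots> = (\<lambda>v. B *\<^sub>v v) ` set (cols A)" unfolding cols_def using A by auto
  finally show ?thesis .
qed

lemma span_cols_mult:
  fixes A B :: "real mat"
  assumes A: "A \<in> carrier_mat k nc" and B: "B \<in> carrier_mat k k" and inv: "invertible_mat B"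
    and sp: "vspan k (set (cols A)) = carrier_vec k"
  shows "vspan k (set (cols (B * A))) = carrier_vec k"
proof -
  from minv_props[OF B inv] have C: "minv B \<in> carrier_mat k k" and BC: "B * minv B = 1\<^sub>m k" by auto
  have BA: "B * A \<in> carrier_mat k nc" using A B by simp
  show ?thesis unfolding span_surj[OF BA]
  proof
    fix w :: "real vec" assume w: "w \<in> carrier_vec k"
    have "minv B *\<^sub>v w \<in> carrier_vec k" using C w by simp
    then obtain x where x: "x \<in> carrier_vec nc" "A *\<^sub>v x = minv B *\<^sub>v w"
      using sp unfolding span_surj[OF A] by blast
    have "(B * A) *\<^sub>v x = B *\<^sub>v (A *\<^sub>v x)" using A B x by simp
    also have "\<dots> = (B * minv B) *\<^sub>v w" using x B C w by simp
    also have "\<dots> = w" using BC w by simp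
    finally show "\<exists>x\<in>carrier_vec nc. (B * A) *\<^sub>v x = w" using x by blast
  qed
qed

lemma span_image_mult:
  fixes S :: "real vec set" and B :: "real mat"
  assumes S: "S \<subseteq> carrier_vec k" "finite S" and B: "B \<in> carrier_mat k k" and inv: "invertible_mat B"
    and sp: "vspan k S = carrier_vec k"
  shows "vspan k ((\<lambda>v. B *\<^sub>v v) ` S) = carrier_vec k"
proof -
  obtain vs where vs: "set vs = S" using finite_list[OF S(2)] by blast
  let ?A = "mat_of_cols k vs"
  have A: "?A \<in> carrier_mat k (length vs)" by simp
  have cA: "set (cols ?A) = S" using vs S by simp
  have "vspan k (set (cols (B * ?A))) = carrier_vec k"
    by (rule span_cols_mult[OF A B inv], simp add: cA sp)
  thus ?thesis using cols_mult_image[OF A B] cA by simp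
qed

section \<open>OLS facts\<close>

lemma gram_X_inj:
  fixes X :: "real mat"
  assumes X: "X \<in> carrier_mat n k" and rk: "mrank n X = k"
  shows "invertible_mat (transpose_mat X * X)"
proof (rule inj_imp_invertible)
  show "transpose_mat X * X \<in> carrier_mat k k" using X by simp
  show "\<forall>v\<in>carrier_vec k. (transpose_mat X * X) *\<^sub>v v = 0\<^sub>v k \<longrightarrow> v = 0\<^sub>v k"
  proof (intro ballI impI)
    fix v :: "real vec" assume v: "v \<in> carrier_vec k" and z: "(transpose_mat X * X) *\<^sub>v v = 0\<^sub>v k"
    have XT: "transpose_mat X \<in> carrier_mat k n" using X by simp
    have "transpose_mat (transpose_mat X) *\<^sub>v v = 0\<^sub>v n"
      using gram_inj[OF XT v] z by simp
    hence "X *\<^sub>v v = 0\<^sub>v n" by simp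
    thus "v = 0\<^sub>v k" using rank_tall_inj[OF X rk v] by simp
  qed
qed

lemma uhat_props:
  fixes X :: "real mat"
  assumes X: "X \<in> carrier_mat n k" and rk: "mrank n X = k" and y: "y \<in> carrier_vec n"
  shows "uhat X y \<in> carrier_vec n \<and> transpose_mat X *\<^sub>v uhat X y = 0\<^sub>v k
     \<and> uhat X y = y - X *\<^sub>v (minv (transpose_mat X * X) *\<^sub>v (transpose_mat X *\<^sub>v y))"
proof -
  let ?G = "transpose_mat X * X"
  have G: "?G \<in> carrier_mat k k" using X by simp
  from minv_props[OF G gram_X_inj[OF X rk]] have C: "minv ?G \<in> carrier_mat k k" and GC: "?G * minv ?G = 1\<^sub>m k"
    by auto
  let ?b = "minv ?G *\<^sub>v (transpose_mat X *\<^sub>v y)"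
  have b: "?b \<in> carrier_vec k" using C X y by simp
  have u: "uhat X y = y - X *\<^sub>v ?b" unfolding uhat_def ..
  have uc: "uhat X y \<in> carrier_vec n" using u X b y by simp
  have "transpose_mat X *\<^sub>v uhat X y = transpose_mat X *\<^sub>v y - transpose_mat X *\<^sub>v (X *\<^sub>v ?b)"
    unfolding u using X y b by (simp add: mult_minus_distrib_mat_vec)
  also have "transpose_mat X *\<^sub>v (X *\<^sub>v ?b) = ?G *\<^sub>v ?b" using X b by simp
  also have "\<dots> = (?G * minv ?G) *\<^sub>v (transpose_mat X *\<^sub>v y)"
    by (rule assoc_mult_mat_vec[symmetric, OF G C], use X y in simp)
  also have "\<dots> = transpose_mat X *\<^sub>v y" using GC X y by simp
  finally have "transpose_mat X *\<^sub>v uhat X y = 0\<^sub>v k" using X y by simp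
  thus ?thesis using uc u by blast
qed

lemma vec_eq_from_minus:
  fixes a b :: "real vec"
  assumes a: "a \<in> carrier_vec m" and b: "b \<in> carrier_vec m" and z: "a - b = 0\<^sub>v m"
  shows "a = b"
proof (rule eq_vecI)
  fix i assume i: "i < dim_vec b"
  have "(a - b) $ i = 0" using z i b by simp
  thus "a $ i = b $ i" using i a b by simp
qed (use a b in simp)

lemma uhat_char:
  fixes X :: "real mat"
  assumes X: "X \<in> carrier_mat n k" and rk: "mrank n X = k" and y: "y \<in> carrier_vec n"
    and b: "b \<in> carrier_vec k" and orth: "transpose_mat X *\<^sub>v (y - X *\<^sub>v b) = 0\<^sub>v k"
  shows "uhat X y = y - X *\<^sub>v b"
proof -
  let ?G = "transpose_mat X * X"
  let ?b0 = "minv ?G *\<^sub>v (transpose_mat X *\<^sub>v y)"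
  have G: "?G \<in> carrier_mat k k" using X by simp
  have Ginv: "invertible_mat ?G" by (rule gram_X_inj[OF X rk])
  from minv_props[OF G Ginv] have C: "minv ?G \<in> carrier_mat k k" by auto
  have b0: "?b0 \<in> carrier_vec k" using C X y by simp
  from uhat_props[OF X rk y] have o0: "transpose_mat X *\<^sub>v (y - X *\<^sub>v ?b0) = 0\<^sub>v k"
    and u0: "uhat X y = y - X *\<^sub>v ?b0" by auto
  have e1: "transpose_mat X *\<^sub>v (y - X *\<^sub>v ?b0) = transpose_mat X *\<^sub>v y - ?G *\<^sub>v ?b0"
    using X y b0 by (simp add: mult_minus_distrib_mat_vec)
  have e2: "transpose_mat X *\<^sub>v (y - X *\<^sub>v b) = transpose_mat X *\<^sub>v y - ?G *\<^sub>v b"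
    using X y b by (simp add: mult_minus_distrib_mat_vec)
  have h1: "transpose_mat X *\<^sub>v y = ?G *\<^sub>v ?b0"
    by (rule vec_eq_from_minus[of _ k], insert X y G b0 e1 o0, auto)
  have h2: "transpose_mat X *\<^sub>v y = ?G *\<^sub>v b"
    by (rule vec_eq_from_minus[of _ k], insert X y G b e2 orth, auto)
  have "?G *\<^sub>v (?b0 - b) = ?G *\<^sub>v ?b0 - ?G *\<^sub>v b"
    using G b0 b by (simp add: mult_minus_distrib_mat_vec)
  also have "\<dots> = 0\<^sub>v k" using h1 h2 G b by simp
  finally have "?b0 - b = 0\<^sub>v k" using invertible_inj[OF G Ginv] b0 b by simp
  hence "?b0 = b" using vec_eq_from_minus[OF b0 b] by simp
  thus ?thesis using u0 by simp
qed

lemma Vhat_carrier: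
  fixes X :: "real mat"
  assumes X: "X \<in> carrier_mat n k" and y: "y \<in> carrier_vec n"
  shows "Vhat X y \<in> carrier_mat k n"
  unfolding Vhat_def using X y by simp

lemma Vhat_index:
  fixes X :: "real mat"
  assumes X: "X \<in> carrier_mat n k" and y: "y \<in> carrier_vec n" and r: "r < k" and j: "j < n"
  shows "Vhat X y $$ (r, j) = X $$ (j, r) * uhat X y $ j"
proof -
  have "Vhat X y = transpose_mat X * mat_diag n (\<lambda>j. uhat X y $ j)" unfolding Vhat_def using y by simp
  also have "\<dots> = mat k n (\<lambda>(i,j). transpose_mat X $$ (i,j) * uhat X y $ j)"
    by (rule mat_diag_mult_right, insert X, simp)
  finally show ?thesis using r j X by simp
qed

lemma Vhat_colsum:
  fixes X :: "real mat"
  assumes X: "X \<in> carrier_mat n k" and rk: "mrank n X = k" and y: "y \<in> carrier_vec n"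
    and x: "x \<in> carrier_vec k"
  shows "(\<Sum>j<n. col (Vhat X y) j \<bullet> x) = 0"
proof -
  let ?u = "uhat X y"
  have V: "Vhat X y \<in> carrier_mat k n" by (rule Vhat_carrier[OF X y])
  from uhat_props[OF X rk y] have uc: "?u \<in> carrier_vec n" and o: "transpose_mat X *\<^sub>v ?u = 0\<^sub>v k" by auto
  have "(\<Sum>j<n. col (Vhat X y) j \<bullet> x) = (\<Sum>j<n. \<Sum>r<k. X $$ (j, r) * ?u $ j * x $ r)"
    by (rule sum.cong, simp, unfold scalar_prod_def, insert V x X y, auto simp: Vhat_index atLeast0LessThan intro!: sum.cong)
  also have "\<dots> = (\<Sum>r<k. x $ r * (\<Sum>j<n. X $$ (j, r) * ?u $ j))"
    by (subst sum.swap, simp add: sum_distrib_left ac_simps)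
  also have "\<dots> = (\<Sum>r<k. x $ r * (transpose_mat X *\<^sub>v ?u) $ r)"
    by (rule sum.cong, simp, insert X uc, auto simp: scalar_prod_def atLeast0LessThan intro!: sum.cong)
  also have "\<dots> = 0" using o by simp
  finally show ?thesis .
qed

section \<open>Combinatorial structure\<close>

lemma sum_block:
  fixes f :: "nat \<Rightarrow> real"
  shows "(\<Sum>i<k*p. f i) = (\<Sum>l<p. \<Sum>r<k. f (l*k + r))"
proof -
  have "(\<Sum>i<k*p. f i) = (\<Sum>l<p. \<Sum>i\<in>{l*k..<l*k+k}. f i)"
    using sum.nat_group[of f k p] by (simp add: mult.commute)
  also have "\<dots> = (\<Sum>l<p. \<Sum>r<k. f (l*k + r))"
  proof (rule sum.cong, simp)
    fix l
    have "(\<Sum>i\<in>{0+l*k..<k+l*k}. f i) = (\<Sum>i\<in>{0..<k}. f (i + l*k))"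
      by (rule sum.shift_bounds_nat_ivl)
    thus "(\<Sum>i\<in>{l*k..<l*k+k}. f i) = (\<Sum>r<k. f (l*k + r))"
      by (simp add: add.commute atLeast0LessThan)
  qed
  finally show ?thesis .
qed

locale vstruct =
  fixes n k p t :: nat and js :: "nat \<Rightarrow> nat" and V :: "real mat"
  assumes V: "V \<in> carrier_mat k n"
    and mono: "strict_mono_on {..t} js" and js0: "js 0 = 0" and jst: "js t < n"
    and nzset: "{j. j < n \<and> col V j \<noteq> 0\<^sub>v k} = js ` {..t}"
    and gaps: "\<forall>i<t. p + 1 \<le> js (Suc i) - js i"
    and tail: "js t + p \<le> n"
    and p1: "1 \<le> p" and t1: "1 \<le> t"
    and orthA: "\<forall>x\<in>carrier_vec k. (\<forall>i<t. col V (js i) \<bullet> x = 0) \<longrightarrow> x = 0\<^sub>v k"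
    and orthB: "\<forall>x\<in>carrier_vec k. (\<forall>i\<in>{1..t}. col V (js i) \<bullet> x = 0) \<longrightarrow> x = 0\<^sub>v k"
begin

lemma sep: "a \<le> b \<Longrightarrow> b \<le> t \<Longrightarrow> js a + (b - a) * (p + 1) \<le> js b"
proof (induction b)
  case 0 thus ?case by simp
next
  case (Suc b)
  show ?case
  proof (cases "a = Suc b")
    case True thus ?thesis by simp
  next
    case False
    hence ab: "a \<le> b" using Suc.prems by simp
    have IH: "js a + (b - a) * (p + 1) \<le> js b" using Suc.IH ab Suc.prems by simp
    have lt: "js b < js (Suc b)" using mono Suc.prems unfolding strict_mono_on_def by auto
    have g: "p + 1 \<le> js (Suc b) - js b" using gaps Suc.prems by auto
    have e: "(Suc b - a) * (p + 1) = (b - a) * (p + 1) + (p + 1)" using ab by (simp add: Suc_diff_le)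
    show ?thesis unfolding e using IH lt g by linarith
  qed
qed

lemma js_le: "i \<le> t \<Longrightarrow> js i \<le> js t"
  using mono unfolding strict_mono_on_def by (cases "i = t") (auto intro: less_imp_le)

lemma js_lt_n: "i \<le> t \<Longrightarrow> js i < n"
  using js_le jst le_less_trans by blast

lemma sep2:
  assumes c: "c \<in> js ` {..t}" and c': "c' \<in> js ` {..t}" and lt: "c < c'"
  shows "c + p + 1 \<le> c'"
proof -
  obtain a b where a: "a \<le> t" "c = js a" and b: "b \<le> t" "c' = js b" using c c' by auto
  have ab: "a < b"
  proof (rule ccontr)
    assume "\<not> a < b"
    hence "b \<le> a" by simp
    hence "js b \<le> js a" using mono a b unfolding strict_mono_on_def
      by (cases "b = a") (auto intro: less_imp_le)
    thus False using a b lt by simp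
  qed
  have "js a + (b - a) * (p + 1) \<le> js b" using sep[of a b] ab b by simp
  moreover have "1 * (p + 1) \<le> (b - a) * (p + 1)" by (rule mult_le_mono1, use ab in simp)
  ultimately show ?thesis using a b by simp
qed

lemma nz_in:
  assumes r: "r < k" and c: "c < n" and nz: "V $$ (r, c) \<noteq> 0"
  shows "c \<in> js ` {..t}"
proof -
  have "col V c $ r = V $$ (r, c)" using V r c by simp
  hence "col V c \<noteq> 0\<^sub>v k" using nz r by auto
  thus ?thesis using nzset c by blast
qed

lemma zero_entry:
  assumes r: "r < k" and c: "c < n" and nin: "c \<notin> js ` {..t}"
  shows "V $$ (r, c) = 0"
  using nz_in[OF r c] nin by blast

lemma entry_sep:
  assumes r: "r < k" and r': "r' < k" and c': "c' < n" and lt: "c < c'" and le: "c' \<le> c + p"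
  shows "V $$ (r, c) * V $$ (r', c') = 0"
proof (rule ccontr)
  assume "V $$ (r, c) * V $$ (r', c') \<noteq> 0"
  hence "V $$ (r, c) \<noteq> 0" "V $$ (r', c') \<noteq> 0" by auto
  hence "c \<in> js ` {..t}" "c' \<in> js ` {..t}" using nz_in r r' c' lt by auto
  from sep2[OF this lt] le show False by simp
qed

abbreviation "V1 \<equiv> V1_mat p V"
abbreviation "Vp \<equiv> Vp_mat p V"

lemma dims: "dim_row V = k" "dim_col V = n" using V by auto

lemma V1_carrier: "V1 \<in> carrier_mat (k * p) (n - p)"
  unfolding V1_mat_def using dims by simp

lemma Vp_carrier: "Vp \<in> carrier_mat k (n - p)"
  unfolding Vp_mat_def using dims by simp

lemma V1_index: "i < k * p \<Longrightarrow> j < n - p \<Longrightarrow> V1 $$ (i, j) = V $$ (i mod k, j + p - 1 - i div k)"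
  unfolding V1_mat_def using dims by simp

lemma Vp_index: "r < k \<Longrightarrow> j < n - p \<Longrightarrow> Vp $$ (r, j) = V $$ (r, j + p)"
  unfolding Vp_mat_def using dims by simp

lemma VpV1: "Vp * transpose_mat V1 = 0\<^sub>m k (k * p)"
proof (rule eq_matI)
  show "dim_row (Vp * transpose_mat V1) = dim_row (0\<^sub>m k (k * p))" using Vp_carrier by simp
  show "dim_col (Vp * transpose_mat V1) = dim_col (0\<^sub>m k (k * p))" using V1_carrier by simp
  fix r i assume r: "r < dim_row (0\<^sub>m k (k * p))" and i: "i < dim_col (0\<^sub>m k (k * p))"
  hence r: "r < k" and i: "i < k * p" by auto
  have kp: "0 < k" using r by simp
  have l: "i div k < p" using i kp by (simp add: div_less_iff_less_mult mult.commute)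
  have im: "i mod k < k" using kp by simp
  have "(Vp * transpose_mat V1) $$ (r, i) = (\<Sum>j<n-p. Vp $$ (r, j) * V1 $$ (i, j))"
    using r i Vp_carrier V1_carrier by (simp add: scalar_prod_def atLeast0LessThan)
  also have "\<dots> = 0"
  proof (rule sum.neutral, rule ballI)
    fix j assume j: "j \<in> {..<n-p}"
    hence j: "j < n - p" by simp
    have "V $$ (i mod k, j + p - 1 - i div k) * V $$ (r, j + p) = 0"
      by (rule entry_sep[OF im r], insert j l p1, auto)
    thus "Vp $$ (r, j) * V1 $$ (i, j) = 0" using Vp_index[OF r j] V1_index[OF i j] by (simp add: mult.commute)
  qed
  finally show "(Vp * transpose_mat V1) $$ (r, i) = 0\<^sub>m k (k * p) $$ (r, i)" using r i by simp
qed

lemma V1T_entry: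
  assumes x: "x \<in> carrier_vec (k * p)" and j: "j < n - p"
  shows "(transpose_mat V1 *\<^sub>v x) $ j = (\<Sum>i<k*p. V1 $$ (i, j) * x $ i)"
  using V1_carrier x j by (simp add: scalar_prod_def atLeast0LessThan)

lemma idx_bound: "l < p \<Longrightarrow> r < k \<Longrightarrow> l * k + r < k * p"
proof -
  assume l: "l < p" and r: "r < k"
  have "l * k + r < l * k + k" using r by simp
  also have "\<dots> = (l + 1) * k" by simp
  also have "\<dots> \<le> p * k" using l by (intro mult_le_mono1) simp
  finally show ?thesis by (simp add: mult.commute)
qed

lemma block_zero:
  assumes x: "x \<in> carrier_vec (k * p)"
    and h: "\<forall>j<n-p. (\<Sum>i<k*p. V1 $$ (i, j) * x $ i) = 0" and l: "l < p"
  shows "vec k (\<lambda>r. x $ (l * k + r)) = 0\<^sub>v k"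
proof -
  let ?xl = "vec k (\<lambda>r. x $ (l * k + r))"
  have key: "col V c \<bullet> ?xl = 0"
    if c: "c \<in> js ` {..t}" and cj: "p \<le> c + l + 1" and cn: "c + l + 1 < n" for c
  proof -
    define j where "j = c + l + 1 - p"
    have j: "j < n - p" using cn cj unfolding j_def by auto
    have jc: "j + p - 1 - l = c" using cj unfolding j_def by auto
    have cn': "c < n" using cn by simp
    have "0 = (\<Sum>i<k*p. V1 $$ (i, j) * x $ i)" using h j by simp
    also have "\<dots> = (\<Sum>l'<p. \<Sum>r<k. V1 $$ (l'*k+r, j) * x $ (l'*k+r))" by (rule sum_block)
    also have "\<dots> = (\<Sum>l'<p. \<Sum>r<k. V $$ (r, j + p - 1 - l') * x $ (l'*k+r))"
    proof (rule sum.cong[OF refl], rule sum.cong[OF refl])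
      fix l' r assume l': "l' \<in> {..<p}" and r: "r \<in> {..<k}"
      have ib: "l'*k + r < k * p" using idx_bound l' r by simp
      have "(l'*k + r) mod k = r" "(l'*k + r) div k = l'" using r by auto
      thus "V1 $$ (l'*k+r, j) * x $ (l'*k+r) = V $$ (r, j + p - 1 - l') * x $ (l'*k+r)"
        using V1_index[OF ib j] by simp
    qed
    also have "\<dots> = (\<Sum>r<k. V $$ (r, j + p - 1 - l) * x $ (l*k+r))
        + (\<Sum>l'\<in>{..<p} - {l}. \<Sum>r<k. V $$ (r, j + p - 1 - l') * x $ (l'*k+r))"
      by (rule sum.remove, simp, use l in simp)
    also have "(\<Sum>l'\<in>{..<p} - {l}. \<Sum>r<k. V $$ (r, j + p - 1 - l') * x $ (l'*k+r)) = 0"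
    proof (rule sum.neutral, rule ballI, rule sum.neutral, rule ballI)
      fix l' r assume l': "l' \<in> {..<p} - {l}" and r: "r \<in> {..<k}"
      have l'p: "l' < p" "l' \<noteq> l" using l' by auto
      let ?c = "j + p - 1 - l'"
      have c'n: "?c < n" using j l'p p1 by auto
      have "V $$ (r, ?c) = 0"
      proof (rule ccontr)
        assume nz: "V $$ (r, ?c) \<noteq> 0"
        have cin: "?c \<in> js ` {..t}" using nz_in[OF _ c'n nz] r by simp
        show False
        proof (cases "l' < l")
          case True
          hence "c < ?c" using jc l p1 by auto
          from sep2[OF c cin this] have "c + p + 1 \<le> ?c" .
          thus False using jc l l'p p1 by auto
        next
          case False
          hence "l < l'" using l'p by simp
          hence "?c < c" using jc l'p p1 by auto
          from sep2[OF cin c this] have "?c + p + 1 \<le> c" .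
          thus False using jc l l'p p1 by auto
        qed
      qed
      thus "V $$ (r, ?c) * x $ (l'*k+r) = 0" by simp
    qed
    also have "(\<Sum>r<k. V $$ (r, j + p - 1 - l) * x $ (l*k+r)) = col V c \<bullet> ?xl"
      unfolding jc scalar_prod_def using V cn' by (auto simp: atLeast0LessThan intro!: sum.cong)
    finally show ?thesis by simp
  qed
  have xl: "?xl \<in> carrier_vec k" by simp
  show ?thesis
  proof (cases "l = p - 1")
    case True
    have "\<forall>i<t. col V (js i) \<bullet> ?xl = 0"
    proof (rule allI, rule impI)
      fix i assume i: "i < t"
      have "js i + p + 1 \<le> js t"
        by (rule sep2, insert i mono, auto simp: strict_mono_on_def)
      thus "col V (js i) \<bullet> ?xl = 0" using key[of "js i"] True i jst p1 by auto
    qed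
    thus ?thesis using orthA xl by blast
  next
    case False
    hence lp: "l + 1 < p" using l by simp
    have "\<forall>i\<in>{1..t}. col V (js i) \<bullet> ?xl = 0"
    proof
      fix i assume i: "i \<in> {1..t}"
      have "js 0 + p + 1 \<le> js i"
        by (rule sep2, insert i mono, auto simp: strict_mono_on_def)
      hence ge: "p + 1 \<le> js i" using js0 by simp
      have "js i \<le> js t" using js_le i by simp
      thus "col V (js i) \<bullet> ?xl = 0" using key[of "js i"] i ge lp tail by auto
    qed
    thus ?thesis using orthB xl by blast
  qed
qed

lemma V1V1_inv: "invertible_mat (V1 * transpose_mat V1)"
proof (rule inj_imp_invertible)
  show "V1 * transpose_mat V1 \<in> carrier_mat (k * p) (k * p)" using V1_carrier by simp
  show "\<forall>v\<in>carrier_vec (k * p). (V1 * transpose_mat V1) *\<^sub>v v = 0\<^sub>v (k * p) \<longrightarrow> v = 0\<^sub>v (k * p)"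
  proof (intro ballI impI)
    fix x :: "real vec" assume x: "x \<in> carrier_vec (k * p)" and z: "(V1 * transpose_mat V1) *\<^sub>v x = 0\<^sub>v (k * p)"
    have z2: "transpose_mat V1 *\<^sub>v x = 0\<^sub>v (n - p)" by (rule gram_inj[OF V1_carrier x z])
    have h: "\<forall>j<n-p. (\<Sum>i<k*p. V1 $$ (i, j) * x $ i) = 0"
    proof (intro allI impI)
      fix j assume j: "j < n - p"
      have "(transpose_mat V1 *\<^sub>v x) $ j = 0" using z2 j by simp
      thus "(\<Sum>i<k*p. V1 $$ (i, j) * x $ i) = 0" using V1T_entry[OF x j] by simp
    qed
    show "x = 0\<^sub>v (k * p)"
    proof (rule eq_vecI)
      fix i assume i: "i < dim_vec (0\<^sub>v (k * p))"
      hence i: "i < k * p" by simp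
      have kp: "0 < k" using i by (cases k) auto
      have l: "i div k < p" using i kp by (simp add: div_less_iff_less_mult mult.commute)
      have r: "i mod k < k" using kp by simp
      have "vec k (\<lambda>r. x $ (i div k * k + r)) = 0\<^sub>v k" by (rule block_zero[OF x h l])
      hence "vec k (\<lambda>r. x $ (i div k * k + r)) $ (i mod k) = 0" using r by simp
      hence "x $ (i div k * k + i mod k) = 0" using r by simp
      thus "x $ i = 0\<^sub>v (k * p) $ i" using i by simp
    qed (use x in simp)
  qed
qed

lemma Ahat_zero_V:
  shows "(if invertible_mat (V1 * transpose_mat V1)
     then Some (Vp * transpose_mat V1 * minv (V1 * transpose_mat V1)) else None) = Some (0\<^sub>m k (k * p))"
proof -
  have C: "V1 * transpose_mat V1 \<in> carrier_mat (k * p) (k * p)" using V1_carrier by simp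
  from minv_props[OF C V1V1_inv] have "minv (V1 * transpose_mat V1) \<in> carrier_mat (k * p) (k * p)" by simp
  thus ?thesis using V1V1_inv VpV1 by simp
qed

lemma orthVp: "\<forall>x\<in>carrier_vec k. (\<forall>j<n - p. col Vp j \<bullet> x = 0) \<longrightarrow> x = 0\<^sub>v k"
proof (intro ballI impI)
  fix x :: "real vec" assume x: "x \<in> carrier_vec k" and o: "\<forall>j<n - p. col Vp j \<bullet> x = 0"
  have "\<forall>i\<in>{1..t}. col V (js i) \<bullet> x = 0"
  proof
    fix i assume i: "i \<in> {1..t}"
    have "js 0 + p + 1 \<le> js i"
      by (rule sep2, insert i mono, auto simp: strict_mono_on_def)
    hence ge: "p + 1 \<le> js i" using js0 by simp
    have lt: "js i < n" using js_lt_n i by simp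
    have j: "js i - p < n - p" using ge lt by simp
    have "col Vp (js i - p) = col V (js i)"
      by (rule eq_vecI, insert Vp_carrier V j ge, auto simp: Vp_index)
    thus "col V (js i) \<bullet> x = 0" using o j by metis
  qed
  thus "x = 0\<^sub>v k" using orthB x by blast
qed

lemma Vp_zero_first: "r < k \<Longrightarrow> Vp $$ (r, 0) = 0"
proof -
  assume r: "r < k"
  have "js 0 + p + 1 \<le> js 1" by (rule sep2, insert t1 mono, auto simp: strict_mono_on_def)
  hence "p < n" using js_lt_n[of 1] t1 js0 by simp
  hence np: "0 < n - p" by simp
  have "p \<notin> js ` {..t}"
  proof
    assume "p \<in> js ` {..t}"
    then obtain i where i: "i \<le> t" "p = js i" by auto
    show False
    proof (cases "i = 0")
      case True thus False using i js0 p1 by simp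
    next
      case False
      have "js 0 + p + 1 \<le> js i" by (rule sep2, insert i False mono, auto simp: strict_mono_on_def)
      thus False using i js0 by simp
    qed
  qed
  thus "Vp $$ (r, 0) = 0" using Vp_index[OF r np] zero_entry[OF r] \<open>p < n\<close> by simp
qed


end

lemma colsum_one:
  fixes f :: "nat \<Rightarrow> real"
  assumes s: "(\<Sum>j<n. f j) = 0" and j0: "j0 < n" and z: "\<forall>j<n. j \<noteq> j0 \<longrightarrow> f j = 0"
  shows "f j0 = 0"
proof -
  have "(\<Sum>j<n. f j) = f j0 + (\<Sum>j\<in>{..<n} - {j0}. f j)" by (rule sum.remove, auto simp: j0)
  also have "(\<Sum>j\<in>{..<n} - {j0}. f j) = 0" by (rule sum.neutral, use z in auto)
  finally show ?thesis using s by simp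
qed

lemma set_cols_eq: "set (cols A) = col A ` {..<dim_col A}"
  unfolding cols_def by auto

lemma condA_vstruct:
  fixes X :: "real mat"
  assumes X: "X \<in> carrier_mat n k" and rk: "mrank n X = k" and y: "y \<in> carrier_vec n"
    and c: "condA p X y t js" and tk: "k \<le> t" and k1: "1 \<le> k" and p1: "1 \<le> p"
  shows "vstruct n k p t js (Vhat X y)"
proof -
  let ?V = "Vhat X y"
  have V: "?V \<in> carrier_mat k n" by (rule Vhat_carrier[OF X y])
  have dy: "dim_vec y = n" and dX: "dim_col X = k" using X y by auto
  note c' = c[unfolded condA_def Let_def dy dX]
  have mono: "strict_mono_on {..t} js" and js0: "js 0 = 0" and jst: "js t < n"
    and nzset: "{j. j < n \<and> col ?V j \<noteq> 0\<^sub>v k} = js ` {..t}"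
    and gaps: "\<forall>i<t. p + 1 \<le> js (Suc i) - js i"
    and tl: "int p - 1 \<le> int n - int (js t + 1)"
    and A3: "if t = k then mrank k ?V = k
       else vspan k ((\<lambda>i. col ?V (js i)) ` {..<t}) = carrier_vec k \<and>
            vspan k ((\<lambda>i. col ?V (js i)) ` {1..t}) = carrier_vec k"
    using c' by auto
  have tail: "js t + p \<le> n" using tl by linarith
  have colc: "\<And>j. col ?V j \<in> carrier_vec k" using V by auto
  have orths: "(\<forall>x\<in>carrier_vec k. (\<forall>i<t. col ?V (js i) \<bullet> x = 0) \<longrightarrow> x = 0\<^sub>v k) \<and>
      (\<forall>x\<in>carrier_vec k. (\<forall>i\<in>{1..t}. col ?V (js i) \<bullet> x = 0) \<longrightarrow> x = 0\<^sub>v k)"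
  proof (cases "t = k")
    case False
    hence sp1: "vspan k ((\<lambda>i. col ?V (js i)) ` {..<t}) = carrier_vec k"
      and sp2: "vspan k ((\<lambda>i. col ?V (js i)) ` {1..t}) = carrier_vec k" using A3 by auto
    show ?thesis
    proof (intro conjI ballI impI)
      fix x :: "real vec" assume x: "x \<in> carrier_vec k" and o: "\<forall>i<t. col ?V (js i) \<bullet> x = 0"
      show "x = 0\<^sub>v k" by (rule span_orth[OF _ sp1 x], insert colc o, auto)
    next
      fix x :: "real vec" assume x: "x \<in> carrier_vec k" and o: "\<forall>i\<in>{1..t}. col ?V (js i) \<bullet> x = 0"
      show "x = 0\<^sub>v k" by (rule span_orth[OF _ sp2 x], insert colc o, auto)
    qed
  next
    case True
    hence "mrank k ?V = k" using A3 by simp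
    from rank_wide_span[OF V this] have sp: "vspan k (set (cols ?V)) = carrier_vec k" .
    have allo: "x = 0\<^sub>v k" if x: "x \<in> carrier_vec k" and o: "\<forall>j<n. col ?V j \<bullet> x = 0" for x
      by (rule span_orth[OF _ sp x], insert colc o V, auto simp: set_cols_eq)
    have zc: "col ?V j \<bullet> x = 0" if "j < n" "j \<notin> js ` {..t}" "x \<in> carrier_vec k" for j x
    proof -
      have "col ?V j = 0\<^sub>v k" using nzset that by blast
      thus ?thesis using that by simp
    qed
    have jsn: "\<And>i. i \<le> t \<Longrightarrow> js i < n"
    proof -
      fix i assume i: "i \<le> t"
      have "js i \<le> js t" using mono i unfolding strict_mono_on_def by (cases "i = t") (auto intro: less_imp_le)
      thus "js i < n" using jst by simp
    qed
    have inj: "\<And>a b. a \<le> t \<Longrightarrow> b \<le> t \<Longrightarrow> js a = js b \<Longrightarrow> a = b"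
      using mono unfolding strict_mono_on_def by (metis atMost_iff linorder_neqE_nat less_irrefl)
    show ?thesis
    proof (intro conjI ballI impI)
      fix x :: "real vec" assume x: "x \<in> carrier_vec k" and o: "\<forall>i<t. col ?V (js i) \<bullet> x = 0"
      have others: "\<forall>j<n. j \<noteq> js t \<longrightarrow> col ?V j \<bullet> x = 0"
      proof (intro allI impI)
        fix j assume j: "j < n" "j \<noteq> js t"
        show "col ?V j \<bullet> x = 0"
        proof (cases "j \<in> js ` {..t}")
          case True
          then obtain i where i: "i \<le> t" "j = js i" by auto
          hence "i < t" using j by (cases "i = t") auto
          thus ?thesis using o i by simp
        qed (use zc j x in auto)
      qed
      have "col ?V (js t) \<bullet> x = 0"
        by (rule colsum_one[OF Vhat_colsum[OF X rk y x] jst others])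
      hence "\<forall>j<n. col ?V j \<bullet> x = 0" using others by auto
      thus "x = 0\<^sub>v k" using allo x by blast
    next
      fix x :: "real vec" assume x: "x \<in> carrier_vec k" and o: "\<forall>i\<in>{1..t}. col ?V (js i) \<bullet> x = 0"
      have j0n: "js 0 < n" using jsn by simp
      have others: "\<forall>j<n. j \<noteq> js 0 \<longrightarrow> col ?V j \<bullet> x = 0"
      proof (intro allI impI)
        fix j assume j: "j < n" "j \<noteq> js 0"
        show "col ?V j \<bullet> x = 0"
        proof (cases "j \<in> js ` {..t}")
          case True
          then obtain i where i: "i \<le> t" "j = js i" by auto
          hence "i \<in> {1..t}" using j by (cases "i = 0") auto
          thus ?thesis using o i by simp
        qed (use zc j x in auto)
      qed
      have "col ?V (js 0) \<bullet> x = 0"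
        by (rule colsum_one[OF Vhat_colsum[OF X rk y x] j0n others])
      hence "\<forall>j<n. col ?V j \<bullet> x = 0" using others by auto
      thus "x = 0\<^sub>v k" using allo x by blast
    qed
  qed
  show ?thesis
    by (unfold_locales, insert V mono js0 jst nzset gaps tail p1 tk k1 orths, auto)
qed

section \<open>Quadratic forms of Gamma and Psi\<close>

lemma quad_form:
  fixes A :: "real mat"
  assumes A: "A \<in> carrier_mat k k" and x: "x \<in> carrier_vec k"
  shows "x \<bullet> (A *\<^sub>v x) = (\<Sum>a<k. \<Sum>b<k. A $$ (a, b) * x $ a * x $ b)"
  using A x by (simp add: scalar_prod_def atLeast0LessThan sum_distrib_left ac_simps)

lemma col_dot:
  fixes Z :: "real mat"
  assumes Z: "Z \<in> carrier_mat k m" and x: "x \<in> carrier_vec k" and j: "j < m"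
  shows "col Z j \<bullet> x = (\<Sum>a<k. Z $$ (a, j) * x $ a)"
  using Z x j by (simp add: scalar_prod_def atLeast0LessThan)

lemma Gam_carrier: "Gam Z i \<in> carrier_mat (dim_row Z) (dim_row Z)"
  unfolding Gam_def by simp

lemma Gam_quad_pos:
  fixes Z :: "real mat"
  assumes Z: "Z \<in> carrier_mat k m" and x: "x \<in> carrier_vec k"
  shows "x \<bullet> (Gam Z (int d) *\<^sub>v x) = (1 / real m) * (\<Sum>j\<in>{d..<m}. (col Z j \<bullet> x) * (col Z (j - d) \<bullet> x))"
proof -
  have G: "Gam Z (int d) \<in> carrier_mat k k" using Gam_carrier[of Z] Z by simp
  have "x \<bullet> (Gam Z (int d) *\<^sub>v x) = (\<Sum>a<k. \<Sum>b<k. Gam Z (int d) $$ (a, b) * x $ a * x $ b)"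
    by (rule quad_form[OF G x])
  also have "\<dots> = (\<Sum>a<k. \<Sum>b<k. (1 / real m) * (\<Sum>j\<in>{d..<m}. Z $$ (a, j) * Z $$ (b, j - d)) * x $ a * x $ b)"
    using Z by (intro sum.cong refl) (simp add: Gam_def)
  also have "\<dots> = (1 / real m) * (\<Sum>j\<in>{d..<m}. \<Sum>a<k. \<Sum>b<k. (Z $$ (a, j) * x $ a) * (Z $$ (b, j - d) * x $ b))"
    by (simp add: sum_distrib_left sum_distrib_right ac_simps, subst sum.swap, rule sum.cong[OF refl], subst sum.swap, simp)
  also have "\<dots> = (1 / real m) * (\<Sum>j\<in>{d..<m}. (col Z j \<bullet> x) * (col Z (j - d) \<bullet> x))"
  proof -
    have "\<And>j. j \<in> {d..<m} \<Longrightarrow> (\<Sum>a<k. \<Sum>b<k. (Z $$ (a, j) * x $ a) * (Z $$ (b, j - d) * x $ b))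
        = (col Z j \<bullet> x) * (col Z (j - d) \<bullet> x)"
    proof -
      fix j assume j: "j \<in> {d..<m}"
      have "(col Z j \<bullet> x) * (col Z (j - d) \<bullet> x) = (\<Sum>a<k. Z $$ (a, j) * x $ a) * (\<Sum>b<k. Z $$ (b, j - d) * x $ b)"
        using col_dot[OF Z x, of j] col_dot[OF Z x, of "j - d"] j less_imp_diff_less[of j m d] by auto
      thus "(\<Sum>a<k. \<Sum>b<k. (Z $$ (a, j) * x $ a) * (Z $$ (b, j - d) * x $ b))
        = (col Z j \<bullet> x) * (col Z (j - d) \<bullet> x)" by (simp add: sum_product)
    qed
    thus ?thesis by simp
  qed
  finally show ?thesis .
qed

lemma Gam_quad_neg:
  fixes Z :: "real mat"
  assumes Z: "Z \<in> carrier_mat k m" and x: "x \<in> carrier_vec k" and i: "i = - int e" and e: "0 < e"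
  shows "x \<bullet> (Gam Z i *\<^sub>v x) = (1 / real m) * (\<Sum>j\<in>{e..<m}. (col Z (j - e) \<bullet> x) * (col Z j \<bullet> x))"
proof -
  have G: "Gam Z i \<in> carrier_mat k k" using Gam_carrier[of Z] Z by simp
  have ni: "\<not> 0 \<le> i" "nat (- i) = e" using i e by auto
  have "x \<bullet> (Gam Z i *\<^sub>v x) = (\<Sum>a<k. \<Sum>b<k. Gam Z i $$ (a, b) * x $ a * x $ b)"
    by (rule quad_form[OF G x])
  also have "\<dots> = (\<Sum>a<k. \<Sum>b<k. (1 / real m) * (\<Sum>j\<in>{e..<m}. Z $$ (b, j) * Z $$ (a, j - e)) * x $ a * x $ b)"
    using Z ni by (intro sum.cong refl) (simp add: Gam_def)
  also have "\<dots> = (1 / real m) * (\<Sum>j\<in>{e..<m}. \<Sum>a<k. \<Sum>b<k. (Z $$ (a, j - e) * x $ a) * (Z $$ (b, j) * x $ b))"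
    by (simp add: sum_distrib_left sum_distrib_right ac_simps, subst sum.swap, rule sum.cong[OF refl], subst sum.swap, simp)
  also have "\<dots> = (1 / real m) * (\<Sum>j\<in>{e..<m}. (col Z (j - e) \<bullet> x) * (col Z j \<bullet> x))"
  proof -
    have "\<And>j. j \<in> {e..<m} \<Longrightarrow> (\<Sum>a<k. \<Sum>b<k. (Z $$ (a, j - e) * x $ a) * (Z $$ (b, j) * x $ b))
        = (col Z (j - e) \<bullet> x) * (col Z j \<bullet> x)"
    proof -
      fix j assume j: "j \<in> {e..<m}"
      have "(col Z (j - e) \<bullet> x) * (col Z j \<bullet> x) = (\<Sum>a<k. Z $$ (a, j - e) * x $ a) * (\<Sum>b<k. Z $$ (b, j) * x $ b)"
        using col_dot[OF Z x, of j] col_dot[OF Z x, of "j - e"] j less_imp_diff_less[of j m e] by auto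
      thus "(\<Sum>a<k. \<Sum>b<k. (Z $$ (a, j - e) * x $ a) * (Z $$ (b, j) * x $ b))
        = (col Z (j - e) \<bullet> x) * (col Z j \<bullet> x)" by (simp add: sum_product)
    qed
    thus ?thesis by simp
  qed
  finally show ?thesis .
qed

lemma dsum_ind:
  fixes z :: "nat \<Rightarrow> real"
  shows "(\<Sum>j\<in>{d..<m}. z j * z (j - d)) = (\<Sum>j<m. \<Sum>j'<m. if int j - int j' = int d then z j * z j' else 0)"
proof -
  have "(\<Sum>j<m. \<Sum>j'<m. if int j - int j' = int d then z j * z j' else 0)
      = (\<Sum>j<m. if d \<le> j then z j * z (j - d) else 0)"
  proof (rule sum.cong[OF refl])
    fix j assume j: "j \<in> {..<m}"
    have "(\<Sum>j'<m. if int j - int j' = int d then z j * z j' else 0)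
        = (\<Sum>j'<m. if j' = j - d then (if d \<le> j then z j * z j' else 0) else 0)"
      by (rule sum.cong[OF refl]) auto
    also have "\<dots> = (if d \<le> j then z j * z (j - d) else 0)"
    proof -
      have "j - d < m" using j by simp
      thus ?thesis by (simp add: sum.delta)
    qed
    finally show "(\<Sum>j'<m. if int j - int j' = int d then z j * z j' else 0) = (if d \<le> j then z j * z (j - d) else 0)" .
  qed
  also have "\<dots> = (\<Sum>j\<in>{j\<in>{..<m}. d \<le> j}. z j * z (j - d))" by (rule sum.inter_filter[symmetric], simp)
  also have "{j\<in>{..<m}. d \<le> j} = {d..<m}" by auto
  finally show ?thesis by simp
qed

lemma dsum_ind_neg:
  fixes z :: "nat \<Rightarrow> real"
  shows "(\<Sum>j\<in>{e..<m}. z (j - e) * z j) = (\<Sum>j<m. \<Sum>j'<m. if int j - int j' = - int e then z j * z j' else 0)"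
proof -
  have "(\<Sum>j<m. \<Sum>j'<m. if int j - int j' = - int e then z j * z j' else 0)
      = (\<Sum>j'<m. \<Sum>j<m. if int j' - int j = int e then z j' * z j else 0)"
    by (subst sum.swap, intro sum.cong refl, auto simp: mult.commute)
  also have "\<dots> = (\<Sum>j\<in>{e..<m}. z j * z (j - e))" by (rule dsum_ind[symmetric])
  finally show ?thesis by (simp add: mult.commute)
qed

lemma Gam_quad_ind:
  fixes Z :: "real mat"
  assumes Z: "Z \<in> carrier_mat k m" and x: "x \<in> carrier_vec k"
  shows "x \<bullet> (Gam Z i *\<^sub>v x) = (1 / real m) *
     (\<Sum>j<m. \<Sum>j'<m. if int j - int j' = i then (col Z j \<bullet> x) * (col Z j' \<bullet> x) else 0)"
proof (cases "0 \<le> i")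
  case True
  then obtain d where d: "i = int d" by (metis nonneg_eq_int)
  show ?thesis unfolding d Gam_quad_pos[OF Z x] dsum_ind[of "\<lambda>j. col Z j \<bullet> x"] ..
next
  case False
  define e where "e = nat (- i)"
  have e: "i = - int e" "0 < e" using False unfolding e_def by auto
  have "x \<bullet> (Gam Z i *\<^sub>v x) = (1 / real m) * (\<Sum>j\<in>{e..<m}. (col Z (j - e) \<bullet> x) * (col Z j \<bullet> x))"
    by (rule Gam_quad_neg[OF Z x e])
  also have "\<dots> = (1 / real m) *
     (\<Sum>j<m. \<Sum>j'<m. if int j - int j' = - int e then (col Z j \<bullet> x) * (col Z j' \<bullet> x) else 0)"
    by (simp only: dsum_ind_neg[of "\<lambda>j. col Z j \<bullet> x"])
  finally show ?thesis unfolding e(1) .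
qed

lemma Psi_quad:
  fixes Z :: "real mat"
  assumes Z: "Z \<in> carrier_mat k m" and x: "x \<in> carrier_vec k"
  shows "x \<bullet> (Psi \<kappa> M Z *\<^sub>v x) = (1 / real m) *
     (\<Sum>j<m. \<Sum>j'<m. kw \<kappa> M (int j - int j') * (col Z j \<bullet> x) * (col Z j' \<bullet> x))"
proof -
  let ?I = "{- (int m - 1) .. int m - 1}"
  let ?z = "\<lambda>j. col Z j \<bullet> x"
  have P: "Psi \<kappa> M Z \<in> carrier_mat k k" using Z unfolding Psi_def by simp
  have G: "\<And>i. Gam Z i \<in> carrier_mat k k" using Gam_carrier[of Z] Z by simp
  have "x \<bullet> (Psi \<kappa> M Z *\<^sub>v x) = (\<Sum>a<k. \<Sum>b<k. Psi \<kappa> M Z $$ (a, b) * x $ a * x $ b)"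
    by (rule quad_form[OF P x])
  also have "\<dots> = (\<Sum>a<k. \<Sum>b<k. (\<Sum>i\<in>?I. kw \<kappa> M i * Gam Z i $$ (a, b)) * x $ a * x $ b)"
    using Z by (intro sum.cong refl) (simp add: Psi_def)
  also have "\<dots> = (\<Sum>i\<in>?I. kw \<kappa> M i * (\<Sum>a<k. \<Sum>b<k. Gam Z i $$ (a, b) * x $ a * x $ b))"
    by (simp add: sum_distrib_left sum_distrib_right ac_simps, subst sum.swap, rule sum.cong[OF refl], subst sum.swap, simp)
  also have "\<dots> = (\<Sum>i\<in>?I. kw \<kappa> M i * (x \<bullet> (Gam Z i *\<^sub>v x)))"
    using quad_form[OF G x] by simp
  also have "\<dots> = (\<Sum>i\<in>?I. kw \<kappa> M i * ((1 / real m) *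
     (\<Sum>j<m. \<Sum>j'<m. if int j - int j' = i then ?z j * ?z j' else 0)))"
    using Gam_quad_ind[OF Z x] by simp
  also have "\<dots> = (\<Sum>i\<in>?I. (1 / real m) * (\<Sum>j<m. \<Sum>j'<m. if int j - int j' = i then kw \<kappa> M i * ?z j * ?z j' else 0))"
  proof (rule sum.cong[OF refl])
    fix i
    show "kw \<kappa> M i * ((1 / real m) * (\<Sum>j<m. \<Sum>j'<m. if int j - int j' = i then ?z j * ?z j' else 0))
       = (1 / real m) * (\<Sum>j<m. \<Sum>j'<m. if int j - int j' = i then kw \<kappa> M i * ?z j * ?z j' else 0)"
      unfolding sum_distrib_left by (intro sum.cong refl) auto
  qed
  also have "\<dots> = (1 / real m) * (\<Sum>i\<in>?I. \<Sum>j<m. \<Sum>j'<m. if int j - int j' = i then kw \<kappa> M i * ?z j * ?z j' else 0)"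
    by (simp add: sum_distrib_left)
  also have "(\<Sum>i\<in>?I. \<Sum>j<m. \<Sum>j'<m. if int j - int j' = i then kw \<kappa> M i * ?z j * ?z j' else 0)
     = (\<Sum>j<m. \<Sum>j'<m. \<Sum>i\<in>?I. if int j - int j' = i then kw \<kappa> M i * ?z j * ?z j' else 0)"
    by (subst sum.swap, rule sum.cong[OF refl], subst sum.swap, rule refl)
  also have "\<dots> = (\<Sum>j<m. \<Sum>j'<m. kw \<kappa> M (int j - int j') * ?z j * ?z j')"
  proof -
    have "\<And>j j'. j < m \<Longrightarrow> j' < m \<Longrightarrow> (\<Sum>i\<in>?I. if int j - int j' = i then kw \<kappa> M i * ?z j * ?z j' else 0)
       = kw \<kappa> M (int j - int j') * ?z j * ?z j'"
      by (subst sum.delta', auto)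
    thus ?thesis by simp
  qed
  finally show ?thesis .
qed

lemma Psi_pos:
  fixes Z :: "real mat"
  assumes Z: "Z \<in> carrier_mat k m" and x: "x \<in> carrier_vec k" and xnz: "x \<noteq> 0\<^sub>v k"
    and orthZ: "\<forall>x\<in>carrier_vec k. (\<forall>j<m. col Z j \<bullet> x = 0) \<longrightarrow> x = 0\<^sub>v k"
    and kern: "kernel_ok \<kappa>" and M: "0 \<le> M"
  shows "x \<bullet> (Psi \<kappa> M Z *\<^sub>v x) > 0"
proof -
  let ?z = "\<lambda>j. col Z j \<bullet> x"
  obtain j0 where j0: "j0 < m" "?z j0 \<noteq> 0" using orthZ x xnz by blast
  have m: "0 < m" using j0 by simp
  have S: "(\<Sum>j<m. \<Sum>j'<m. kw \<kappa> M (int j - int j') * ?z j * ?z j') > 0"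
  proof (cases "M = 0")
    case True
    have "(\<Sum>j<m. \<Sum>j'<m. kw \<kappa> M (int j - int j') * ?z j * ?z j') = (\<Sum>j<m. ?z j * ?z j)"
    proof (rule sum.cong[OF refl])
      fix j assume j: "j \<in> {..<m}"
      have "(\<Sum>j'<m. kw \<kappa> M (int j - int j') * ?z j * ?z j') = (\<Sum>j'<m. if j = j' then ?z j * ?z j' else 0)"
        using True by (intro sum.cong refl) (auto simp: kw_def)
      also have "\<dots> = ?z j * ?z j" using j by (simp add: sum.delta)
      finally show "(\<Sum>j'<m. kw \<kappa> M (int j - int j') * ?z j * ?z j') = ?z j * ?z j" .
    qed
    also have "\<dots> > 0"
    proof -
      have "(\<Sum>j<m. ?z j * ?z j) \<ge> ?z j0 * ?z j0"
        by (rule member_le_sum, insert j0, auto)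
      moreover have "?z j0 * ?z j0 > 0" using j0(2)
        by (cases "?z j0 > 0") (auto simp: mult_neg_neg)
      ultimately show ?thesis by linarith
    qed
    finally show ?thesis .
  next
    case False
    hence Mp: "0 < M" using M by simp
    have kp: "\<And>s J (x :: nat \<Rightarrow> real). 0 < s \<Longrightarrow> (\<exists>i<J. x i \<noteq> 0) \<Longrightarrow>
        0 < (\<Sum>i<J. \<Sum>j<J. x i * x j * \<kappa> ((real i - real j) / s))"
      using kern unfolding kernel_ok_def by blast
    have "0 < (\<Sum>i<m. \<Sum>j<m. ?z i * ?z j * \<kappa> ((real i - real j) / M))"
      by (rule kp[OF Mp], use j0 in blast)
    also have "\<dots> = (\<Sum>j<m. \<Sum>j'<m. kw \<kappa> M (int j - int j') * ?z j * ?z j')"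
      using False by (intro sum.cong refl) (simp add: kw_def ac_simps)
    finally show ?thesis .
  qed
  show ?thesis unfolding Psi_quad[OF Z x] using S m by simp
qed

context vstruct
begin

lemma Vp_adj_zero: "r < k \<Longrightarrow> 1 \<le> j \<Longrightarrow> j < n - p \<Longrightarrow> Vp $$ (r, j) * Vp $$ (r, j - 1) = 0"
proof -
  assume r: "r < k" and j1: "1 \<le> j" and j: "j < n - p"
  have "V $$ (r, j - 1 + p) * V $$ (r, j + p) = 0"
    by (rule entry_sep[OF r r], insert j j1 p1, auto)
  moreover have "j - 1 < n - p" using j by simp
  ultimately show ?thesis using Vp_index[OF r j] Vp_index[OF r, of "j - 1"] by (simp add: mult.commute)
qed

lemma rho_zero: "i < k \<Longrightarrow> rho Vp i = 0"
proof -
  assume i: "i < k"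
  have "(\<Sum>j\<in>{1..<dim_col Vp}. Vp $$ (i, j) * Vp $$ (i, j - 1)) = 0"
  proof (rule sum.neutral, rule ballI)
    fix j assume "j \<in> {1..<dim_col Vp}"
    thus "Vp $$ (i, j) * Vp $$ (i, j - 1) = 0" using Vp_adj_zero[OF i] Vp_carrier by auto
  qed
  thus ?thesis unfolding rho_def by simp
qed

lemma weights_pos: "weights_ok k \<omega> \<Longrightarrow> \<exists>i<k. 0 < \<omega> $ i"
proof -
  assume w: "weights_ok k \<omega>"
  hence wc: "\<omega> \<in> carrier_vec k" and nz: "\<omega> \<noteq> 0\<^sub>v k" and nn: "\<forall>i<k. 0 \<le> \<omega> $ i"
    unfolding weights_ok_def by auto
  obtain i where "i < k" "\<omega> $ i \<noteq> 0"
    using nz wc by (metis eq_vecI carrier_vecD index_zero_vec)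
  thus ?thesis using nn by force
qed

lemma am_val:
  assumes b: "b = BW_AM \<omega> c1 c2 jsel" and ok: "bw_ok k b"
    and rows: "\<forall>i<k. \<exists>j<dim_col Vp - 1. Vp $$ (i, j) \<noteq> 0"
  shows "\<exists>M. bw_val b n' Vp = Some M \<and> 0 \<le> M"
proof -
  have w: "weights_ok k \<omega>" and c1: "0 < c1" using ok b by auto
  have dr: "dim_row Vp = k" and dc: "dim_col Vp = n - p" using Vp_carrier by auto
  have rd: "rho_den Vp i \<noteq> 0" and s2: "sig2 Vp i > 0" if i: "i < k" for i
  proof -
    obtain j0 where j0: "j0 < dim_col Vp - 1" "Vp $$ (i, j0) \<noteq> 0" using rows i by blast
    have "j0 \<noteq> 0" using Vp_zero_first[OF i] j0(2) by metis
    hence j01: "j0 \<in> {1..<dim_col Vp}" using j0 by auto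
    have "(Vp $$ (i, j0))\<^sup>2 \<le> rho_den Vp i" unfolding rho_den_def
      by (rule member_le_sum, insert j0, auto)
    moreover have "(Vp $$ (i, j0))\<^sup>2 > 0" using j0 by simp
    ultimately show "rho_den Vp i \<noteq> 0" by linarith
    have "(Vp $$ (i, j0))\<^sup>2 \<le> (\<Sum>j\<in>{1..<dim_col Vp}. (Vp $$ (i, j) - rho Vp i * Vp $$ (i, j - 1))\<^sup>2)"
      using member_le_sum[OF j01, of "\<lambda>j. (Vp $$ (i, j) - rho Vp i * Vp $$ (i, j - 1))\<^sup>2"] rho_zero[OF i] by simp
    hence sp: "0 < (\<Sum>j\<in>{1..<dim_col Vp}. (Vp $$ (i, j) - rho Vp i * Vp $$ (i, j - 1))\<^sup>2)"
      using \<open>(Vp $$ (i, j0))\<^sup>2 > 0\<close> by linarith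
    have "real (dim_col Vp) - 1 > 0" using j0 by auto
    thus "sig2 Vp i > 0" unfolding sig2_def using sp by simp
  qed
  obtain i0 where i0: "i0 < k" "0 < \<omega> $ i0" using weights_pos[OF w] by blast
  have nn: "\<forall>i<k. 0 \<le> \<omega> $ i" using w unfolding weights_ok_def by auto
  let ?den = "\<Sum>i<k. \<omega> $ i * (sig2 Vp i)\<^sup>2 / (1 - rho Vp i) ^ 4"
  have den: "?den > 0"
  proof -
    have "?den = (\<Sum>i<k. \<omega> $ i * (sig2 Vp i)\<^sup>2)" using rho_zero by simp
    also have "\<dots> \<ge> \<omega> $ i0 * (sig2 Vp i0)\<^sup>2"
      by (rule member_le_sum, insert i0 nn, auto)
    finally have "?den \<ge> \<omega> $ i0 * (sig2 Vp i0)\<^sup>2" .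
    moreover have "\<omega> $ i0 * (sig2 Vp i0)\<^sup>2 > 0" using i0 s2[OF i0(1)] by simp
    ultimately show ?thesis by linarith
  qed
  have cond: "(\<forall>i<k. rho_den Vp i \<noteq> 0 \<and> rho Vp i \<noteq> 1 \<and> (jsel = 1 \<longrightarrow> rho Vp i \<noteq> -1)) \<and> ?den \<noteq> 0"
    using rd rho_zero den by auto
  show ?thesis unfolding b using cond dr c1 by (auto simp: Let_def)
qed

lemma nw_val:
  assumes b: "b = BW_NW w \<omega> c1 c2 c3" and ok: "bw_ok k b"
    and sgn: "(\<forall>j<dim_col Vp. 0 \<le> \<omega> \<bullet> col Vp j) \<or> (\<forall>j<dim_col Vp. \<omega> \<bullet> col Vp j \<le> 0)"
  shows "\<exists>M. bw_val b n' Vp = Some M \<and> 0 \<le> M"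
proof -
  have wok: "weights_ok k \<omega>" and c2: "0 < c2" and wn: "\<forall>i. 0 \<le> w i" and w0: "w 0 = 1"
    using ok b by auto
  have wc: "\<omega> \<in> carrier_vec k" and wnz: "\<omega> \<noteq> 0\<^sub>v k" using wok unfolding weights_ok_def by auto
  let ?m = "n - p"
  have Z: "Vp \<in> carrier_mat k ?m" by (rule Vp_carrier)
  have dc: "dim_col Vp = ?m" using Z by simp
  let ?z = "\<lambda>j. col Vp j \<bullet> \<omega>"
  have zc: "\<And>j. j < ?m \<Longrightarrow> ?z j = \<omega> \<bullet> col Vp j" using comm_scalar_prod[OF _ wc] Z by auto
  have prod_nn: "0 \<le> ?z j * ?z j'" if "j < ?m" "j' < ?m" for j j'
    using sgn that zc dc by (auto intro: mult_nonneg_nonneg mult_nonpos_nonpos)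
  obtain j0 where j0: "j0 < ?m" "?z j0 \<noteq> 0" using orthVp wc wnz by blast
  have m: "0 < ?m" using j0 by simp
  let ?I = "{- (int ?m - 1) .. int ?m - 1}"
  let ?sb = "\<lambda>i. \<omega> \<bullet> (Gam Vp \<bar>i\<bar> *\<^sub>v \<omega>)"
  have sbq: "?sb i = (1 / real ?m) * (\<Sum>j\<in>{nat \<bar>i\<bar>..<?m}. ?z j * ?z (j - nat \<bar>i\<bar>))" for i
  proof -
    have "\<bar>i\<bar> = int (nat \<bar>i\<bar>)" by simp
    hence "?sb i = \<omega> \<bullet> (Gam Vp (int (nat \<bar>i\<bar>)) *\<^sub>v \<omega>)" by metis
    also have "\<dots> = (1 / real ?m) * (\<Sum>j\<in>{nat \<bar>i\<bar>..<?m}. ?z j * ?z (j - nat \<bar>i\<bar>))"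
      by (rule Gam_quad_pos[OF Z wc])
    finally show ?thesis .
  qed
  have tnn: "0 \<le> w i * ?sb i" for i
  proof -
    have "0 \<le> (\<Sum>j\<in>{nat \<bar>i\<bar>..<?m}. ?z j * ?z (j - nat \<bar>i\<bar>))"
      by (rule sum_nonneg, rule prod_nn, auto)
    thus ?thesis using sbq[of i] wn by simp
  qed
  have t0: "0 < w 0 * ?sb 0"
  proof -
    have "?z j0 * ?z j0 \<le> (\<Sum>j\<in>{0..<?m}. ?z j * ?z j)"
      by (rule member_le_sum, insert j0 prod_nn, auto)
    moreover have "?z j0 * ?z j0 > 0" using j0(2) by (cases "?z j0 > 0") (auto simp: mult_neg_neg)
    ultimately have "0 < (\<Sum>j\<in>{0..<?m}. ?z j * ?z j)" by linarith
    thus ?thesis using sbq[of 0] w0 m by simp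
  qed
  let ?den = "\<Sum>i\<in>?I. w i * ?sb i"
  have "w 0 * ?sb 0 \<le> ?den" by (rule member_le_sum, insert m tnn, auto)
  hence den: "?den \<noteq> 0" using t0 by linarith
  show ?thesis unfolding b using den dc c2 by (auto simp: Let_def)
qed

lemma rows_nonzero:
  assumes tl: "js t + p < n"
  shows "\<forall>i<k. \<exists>j<dim_col Vp - 1. Vp $$ (i, j) \<noteq> 0"
proof (intro allI impI)
  fix i assume i: "i < k"
  show "\<exists>j<dim_col Vp - 1. Vp $$ (i, j) \<noteq> 0"
  proof (rule ccontr)
    assume "\<not> (\<exists>j<dim_col Vp - 1. Vp $$ (i, j) \<noteq> 0)"
    hence z: "\<forall>j<n - p - 1. Vp $$ (i, j) = 0" using Vp_carrier by auto
    have "\<forall>l\<in>{1..t}. col V (js l) \<bullet> unit_vec k i = 0"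
    proof
      fix l assume l: "l \<in> {1..t}"
      have "js 0 + p + 1 \<le> js l" by (rule sep2, insert l mono, auto simp: strict_mono_on_def)
      hence ge: "p + 1 \<le> js l" using js0 by simp
      have le: "js l \<le> js t" using js_le l by simp
      have j: "js l - p < n - p - 1" using ge le tl p1 by linarith
      have "col V (js l) \<bullet> unit_vec k i = V $$ (i, js l)" using i V le tl by simp
      also have "\<dots> = Vp $$ (i, js l - p)" using Vp_index[OF i, of "js l - p"] j ge by simp
      also have "\<dots> = 0" using z j by simp
      finally show "col V (js l) \<bullet> unit_vec k i = 0" .
    qed
    hence "unit_vec k i = (0\<^sub>v k :: real vec)" using orthB by simp
    thus False using i by (metis index_unit_vec(1) index_zero_vec(1) zero_neq_one)
  qed
qed

end

lemma smult_mat_vec: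
  fixes A :: "real mat"
  assumes "dim_vec v = dim_col A"
  shows "(c \<cdot>\<^sub>m A) *\<^sub>v v = c \<cdot>\<^sub>v (A *\<^sub>v v)"
  by (rule eq_vecI) (insert assms, auto simp: scalar_prod_def sum_distrib_left ac_simps intro!: sum.cong)

lemma minv_sym:
  fixes X :: "real mat"
  assumes X: "X \<in> carrier_mat n k" and rk: "mrank n X = k"
  shows "transpose_mat (minv (transpose_mat X * X)) = minv (transpose_mat X * X)"
proof -
  let ?G = "transpose_mat X * X"
  have G: "?G \<in> carrier_mat k k" using X by simp
  from minv_props[OF G gram_X_inj[OF X rk]] have C: "minv ?G \<in> carrier_mat k k"
    and GC: "?G * minv ?G = 1\<^sub>m k" and CG: "minv ?G * ?G = 1\<^sub>m k" by auto
  have GT: "transpose_mat ?G = ?G" using X by (simp add: transpose_mult)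
  have "minv ?G = transpose_mat (minv ?G)"
  proof (rule minv_unique[OF G])
    show "transpose_mat (minv ?G) \<in> carrier_mat k k" using C by simp
    have "?G * transpose_mat (minv ?G) = transpose_mat (minv ?G * ?G)"
      using transpose_mult[OF C G] GT by simp
    thus "?G * transpose_mat (minv ?G) = 1\<^sub>m k" using CG by simp
    have "transpose_mat (minv ?G) * ?G = transpose_mat (?G * minv ?G)"
      using transpose_mult[OF G C] GT by simp
    thus "transpose_mat (minv ?G) * ?G = 1\<^sub>m k" using GC by simp
  qed
  thus ?thesis by simp
qed

lemma rank_R_inj:
  fixes R :: "real mat"
  assumes R: "R \<in> carrier_mat q k" and rk: "mrank q R = q" and v: "v \<in> carrier_vec q"
    and z: "transpose_mat R *\<^sub>v v = 0\<^sub>v k"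
  shows "v = 0\<^sub>v q"
proof -
  have sp: "vspan q (set (cols R)) = carrier_vec q" by (rule rank_wide_span[OF R rk])
  show ?thesis
  proof (rule span_orth[OF _ sp v])
    show "set (cols R) \<subseteq> carrier_vec q" using R cols_dim[of R] by auto
    show "\<forall>w\<in>set (cols R). w \<bullet> v = 0"
    proof
      fix w assume "w \<in> set (cols R)"
      then obtain j where j: "j < k" "w = col R j" using R by (auto simp: set_cols_eq)
      have "(transpose_mat R *\<^sub>v v) $ j = 0" using z j by simp
      thus "w \<bullet> v = 0" using j R by simp
    qed
  qed
qed

lemma id_invertible: "invertible_mat (1\<^sub>m k :: real mat)"
  unfolding invertible_mat_def inverts_mat_def by (auto intro!: exI[of _ "1\<^sub>m k"])

lemma Omega_ok:
  fixes X R :: "real mat"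
  assumes X: "X \<in> carrier_mat n k" and rk: "mrank n X = k" and y: "y \<in> carrier_vec n"
    and vs: "vstruct n k p t js (Vhat X y)"
    and R: "R \<in> carrier_mat q k" and rkR: "mrank q R = q"
    and kern: "kernel_ok \<kappa>"
    and bw: "bw_val b n (Vp_mat p (Vhat X y)) = Some M" and M: "0 \<le> M"
  shows "y \<notin> Nstar \<kappa> b p R X"
proof -
  interpret vstruct n k p t js "Vhat X y" by (rule vs)
  let ?V = "Vhat X y"
  let ?G = "minv (transpose_mat X * X)"
  let ?Z = "Vp_mat p ?V"
  let ?P = "Psi \<kappa> M ?Z"
  have G0: "transpose_mat X * X \<in> carrier_mat k k" using X by simp
  from minv_props[OF G0 gram_X_inj[OF X rk]] have G: "?G \<in> carrier_mat k k" by simp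
  have Gi: "invertible_mat ?G"
  proof -
    from minv_props[OF G0 gram_X_inj[OF X rk]] have "transpose_mat X * X * ?G = 1\<^sub>m k" "?G * (transpose_mat X * X) = 1\<^sub>m k"
      by auto
    thus ?thesis unfolding invertible_mat_def inverts_mat_def using G G0 by auto
  qed
  have Z: "?Z \<in> carrier_mat k (n - p)" by (rule Vp_carrier)
  have P: "?P \<in> carrier_mat k k" using Z unfolding Psi_def by simp
  have Ah: "Ahat p X y = Some (0\<^sub>m k (k * p))" unfolding Ahat_def Let_def using Ahat_zero_V by simp
  have Z1: "0\<^sub>m k (k * p) * V1_mat p ?V = 0\<^sub>m k (n - p)" using V1_carrier by simp
  have Z2: "Vp_mat p ?V - 0\<^sub>m k (n - p) = ?Z"
    by (rule eq_matI, insert Z, auto)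
  have sA: "sumA p (0\<^sub>m k (k * p)) = 0\<^sub>m k k"
    by (rule eq_matI, auto simp: sumA_def idx_bound intro!: sum.neutral)
  have S: "1\<^sub>m k - 0\<^sub>m k k = (1\<^sub>m k :: real mat)" by (rule eq_matI, auto)
  have F: "minv (1\<^sub>m k) = (1\<^sub>m k :: real mat)" by (rule minv_unique, auto)
  let ?Om = "real n \<cdot>\<^sub>m (R * ?G * ?P * ?G * transpose_mat R)"
  have Om: "Omega_hat \<kappa> b p R X y = Some ?Om"
  proof -
    have dy: "dim_vec y = n" and dX: "dim_col X = k" using X y by auto
    have "R * ?G * 1\<^sub>m k = R * ?G" using R G by simp
    moreover have "R * ?G * ?P * 1\<^sub>m k = R * ?G * ?P" using R G P by simp
    ultimately show ?thesis unfolding Omega_hat_def Ah Let_def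
      using id_invertible[of k] F dy dX Z1 Z2 sA S bw by simp
  qed
  have inj: "\<forall>v\<in>carrier_vec q. ?Om *\<^sub>v v = 0\<^sub>v q \<longrightarrow> v = 0\<^sub>v q"
  proof (intro ballI impI)
    fix v :: "real vec" assume v: "v \<in> carrier_vec q" and z: "?Om *\<^sub>v v = 0\<^sub>v q"
    let ?u = "transpose_mat R *\<^sub>v v"
    let ?w = "?G *\<^sub>v ?u"
    have u: "?u \<in> carrier_vec k" using R v by simp
    have w: "?w \<in> carrier_vec k" using G u by simp
    have n0: "0 < n" using jst by simp
    have e1: "(R * ?G * ?P * ?G * transpose_mat R) *\<^sub>v v = R *\<^sub>v (?G *\<^sub>v (?P *\<^sub>v ?w))"
    proof -
      have A1: "R * ?G \<in> carrier_mat q k" using R G by simp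
      have A2: "R * ?G * ?P \<in> carrier_mat q k" using A1 P by simp
      have A3: "R * ?G * ?P * ?G \<in> carrier_mat q k" using A2 G by simp
      have RT: "transpose_mat R \<in> carrier_mat k q" using R by simp
      have "(R * ?G * ?P * ?G * transpose_mat R) *\<^sub>v v = (R * ?G * ?P * ?G) *\<^sub>v ?u"
        by (rule assoc_mult_mat_vec[OF A3 RT v])
      also have "\<dots> = (R * ?G * ?P) *\<^sub>v ?w" by (rule assoc_mult_mat_vec[OF A2 G u])
      also have "\<dots> = (R * ?G) *\<^sub>v (?P *\<^sub>v ?w)" by (rule assoc_mult_mat_vec[OF A1 P w])
      also have "\<dots> = R *\<^sub>v (?G *\<^sub>v (?P *\<^sub>v ?w))" by (rule assoc_mult_mat_vec[OF R G], use P w in simp)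
      finally show ?thesis .
    qed
    have z': "(R * ?G * ?P * ?G * transpose_mat R) *\<^sub>v v = 0\<^sub>v q"
    proof -
      have "real n \<cdot>\<^sub>v ((R * ?G * ?P * ?G * transpose_mat R) *\<^sub>v v) = 0\<^sub>v q"
        using z smult_mat_vec[of v "R * ?G * ?P * ?G * transpose_mat R" "real n"] v R by simp
      hence "\<forall>i<q. real n * ((R * ?G * ?P * ?G * transpose_mat R) *\<^sub>v v) $ i = 0"
        by (metis index_smult_vec(1) index_zero_vec(1) index_smult_vec(2) index_zero_vec(2))
      thus ?thesis using n0 R by (intro eq_vecI) auto
    qed
    have pv: "?P *\<^sub>v ?w \<in> carrier_vec k" using P w by simp
    have "v \<bullet> (R *\<^sub>v (?G *\<^sub>v (?P *\<^sub>v ?w))) = ?u \<bullet> (?G *\<^sub>v (?P *\<^sub>v ?w))"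
      using transpose_vec_mult_scalar[OF R _ v, of "?G *\<^sub>v (?P *\<^sub>v ?w)"] G pv by simp
    also have "\<dots> = (transpose_mat ?G *\<^sub>v ?u) \<bullet> (?P *\<^sub>v ?w)"
      using transpose_vec_mult_scalar[OF G pv u] by simp
    also have "\<dots> = ?w \<bullet> (?P *\<^sub>v ?w)" using minv_sym[OF X rk] by simp
    finally have q0: "?w \<bullet> (?P *\<^sub>v ?w) = 0" using z' e1 v by simp
    have "?w = 0\<^sub>v k"
    proof (rule ccontr)
      assume "?w \<noteq> 0\<^sub>v k"
      from Psi_pos[OF Z w this orthVp kern M] q0 show False by simp
    qed
    hence "?u = 0\<^sub>v k" using invertible_inj[OF G Gi u] by simp
    thus "v = 0\<^sub>v q" by (rule rank_R_inj[OF R rkR v])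
  qed
  have c1: "R * ?G \<in> carrier_mat q k" by (rule mult_carrier_mat[OF R G])
  have c2: "R * ?G * ?P \<in> carrier_mat q k" by (rule mult_carrier_mat[OF c1 P])
  have c3: "R * ?G * ?P * ?G \<in> carrier_mat q k" by (rule mult_carrier_mat[OF c2 G])
  have c4: "R * ?G * ?P * ?G * transpose_mat R \<in> carrier_mat q q"
    by (rule mult_carrier_mat[OF c3], use R in simp)
  have Omc: "?Om \<in> carrier_mat q q" using c4 by (simp only: smult_carrier_mat)
  have "invertible_mat ?Om" by (rule inj_imp_invertible[OF Omc inj])
  thus ?thesis unfolding Nstar_def using Om by simp
qed

section \<open>Change of basis (part 3)\<close>

lemma transpose_invertible:
  fixes Q :: "real mat"
  assumes Q: "Q \<in> carrier_mat k k" and inv: "invertible_mat Q"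
  shows "invertible_mat (transpose_mat Q)"
proof -
  from minv_props[OF Q inv] have C: "minv Q \<in> carrier_mat k k" and QC: "Q * minv Q = 1\<^sub>m k"
    and CQ: "minv Q * Q = 1\<^sub>m k" by auto
  have "transpose_mat Q * transpose_mat (minv Q) = 1\<^sub>m k"
    using transpose_mult[OF C Q] CQ by simp
  moreover have "transpose_mat (minv Q) * transpose_mat Q = 1\<^sub>m k"
    using transpose_mult[OF Q C] QC by simp
  ultimately show ?thesis unfolding invertible_mat_def inverts_mat_def using Q C
    by (auto intro!: exI[of _ "transpose_mat (minv Q)"])
qed

lemma XQ_facts:
  fixes X Q :: "real mat"
  assumes X: "X \<in> carrier_mat n k" and rk: "mrank n X = k" and y: "y \<in> carrier_vec n"
    and Q: "Q \<in> carrier_mat k k" and Qi: "invertible_mat Q"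
  shows "X * Q \<in> carrier_mat n k \<and> mrank n (X * Q) = k \<and> Vhat (X * Q) y = transpose_mat Q * Vhat X y"
proof -
  have XQ: "X * Q \<in> carrier_mat n k" using X Q by simp
  have QT: "transpose_mat Q \<in> carrier_mat k k" using Q by simp
  have QTi: "invertible_mat (transpose_mat Q)" by (rule transpose_invertible[OF Q Qi])
  have rkQ: "mrank n (X * Q) = k"
  proof (rule inj_rank_tall[OF XQ], intro ballI impI)
    fix v :: "real vec" assume v: "v \<in> carrier_vec k" and z: "(X * Q) *\<^sub>v v = 0\<^sub>v n"
    have "X *\<^sub>v (Q *\<^sub>v v) = 0\<^sub>v n" using z X Q v by simp
    hence "Q *\<^sub>v v = 0\<^sub>v k" using rank_tall_inj[OF X rk] Q v by simp
    thus "v = 0\<^sub>v k" using invertible_inj[OF Q Qi v] by simp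
  qed
  from uhat_props[OF XQ rkQ y] have o': "transpose_mat (X * Q) *\<^sub>v uhat (X * Q) y = 0\<^sub>v k"
    and u': "uhat (X * Q) y = y - (X * Q) *\<^sub>v (minv (transpose_mat (X * Q) * (X * Q)) *\<^sub>v (transpose_mat (X * Q) *\<^sub>v y))"
    by auto
  let ?b = "minv (transpose_mat (X * Q) * (X * Q)) *\<^sub>v (transpose_mat (X * Q) *\<^sub>v y)"
  have G: "transpose_mat (X * Q) * (X * Q) \<in> carrier_mat k k" using XQ by simp
  from minv_props[OF G gram_X_inj[OF XQ rkQ]] have C: "minv (transpose_mat (X * Q) * (X * Q)) \<in> carrier_mat k k" by simp
  have b: "?b \<in> carrier_vec k" using C XQ y by simp
  have Qb: "Q *\<^sub>v ?b \<in> carrier_vec k" using Q b by simp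
  have uc: "uhat (X * Q) y \<in> carrier_vec n" using uhat_props[OF XQ rkQ y] by blast
  have e: "(X * Q) *\<^sub>v ?b = X *\<^sub>v (Q *\<^sub>v ?b)" using X Q b by simp
  have "transpose_mat Q *\<^sub>v (transpose_mat X *\<^sub>v uhat (X * Q) y) = 0\<^sub>v k"
    using o' transpose_mult[OF X Q] assoc_mult_mat_vec[OF QT _ uc, of "transpose_mat X"] X by simp
  hence "transpose_mat X *\<^sub>v uhat (X * Q) y = 0\<^sub>v k"
    using invertible_inj[OF QT QTi] X uc by simp
  hence "transpose_mat X *\<^sub>v (y - X *\<^sub>v (Q *\<^sub>v ?b)) = 0\<^sub>v k" using u' e by simp
  from uhat_char[OF X rk y Qb this] have "uhat X y = y - X *\<^sub>v (Q *\<^sub>v ?b)" .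
  hence uu: "uhat (X * Q) y = uhat X y" using u' e by simp
  have "Vhat (X * Q) y = transpose_mat (X * Q) * mat_diag (dim_vec y) (\<lambda>j. uhat X y $ j)"
    unfolding Vhat_def uu ..
  also have "\<dots> = (transpose_mat Q * transpose_mat X) * mat_diag (dim_vec y) (\<lambda>j. uhat X y $ j)"
    using transpose_mult[OF X Q] by simp
  also have "\<dots> = transpose_mat Q * (transpose_mat X * mat_diag (dim_vec y) (\<lambda>j. uhat X y $ j))"
  proof -
    have XT: "transpose_mat X \<in> carrier_mat k n" using X by simp
    have D: "mat_diag (dim_vec y) (\<lambda>j. uhat X y $ j) \<in> carrier_mat n n" using y by simp
    show ?thesis by (rule assoc_mult_mat[OF QT XT D])
  qed
  also have "\<dots> = transpose_mat Q * Vhat X y" unfolding Vhat_def ..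
  finally show ?thesis using XQ rkQ by simp
qed

lemma condA_transfer:
  fixes X Q :: "real mat"
  assumes X: "X \<in> carrier_mat n k" and rk: "mrank n X = k" and y: "y \<in> carrier_vec n"
    and Q: "Q \<in> carrier_mat k k" and Qi: "invertible_mat Q" and c: "condA p X y t js"
  shows "condA p (X * Q) y t js"
proof -
  let ?V = "Vhat X y"
  let ?B = "transpose_mat Q"
  from XQ_facts[OF X rk y Q Qi] have XQ: "X * Q \<in> carrier_mat n k" and rkQ: "mrank n (X * Q) = k"
    and VV: "Vhat (X * Q) y = ?B * ?V" by auto
  have V: "?V \<in> carrier_mat k n" by (rule Vhat_carrier[OF X y])
  have B: "?B \<in> carrier_mat k k" using Q by simp
  have Bi: "invertible_mat ?B" by (rule transpose_invertible[OF Q Qi])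
  have dy: "dim_vec y = n" and dX: "dim_col X = k" and dXQ: "dim_col (X * Q) = k" using X y Q by auto
  have colB: "\<And>j. j < n \<Longrightarrow> col (?B * ?V) j = ?B *\<^sub>v col ?V j" by (rule col_mult2[OF B V])
  have nzeq: "\<And>j. j < n \<Longrightarrow> (col (?B * ?V) j \<noteq> 0\<^sub>v k) = (col ?V j \<noteq> 0\<^sub>v k)"
  proof -
    fix j assume j: "j < n"
    have cv: "col ?V j \<in> carrier_vec k" using col_dim[of ?V j] V by (simp only: carrier_matD)
    have "?B *\<^sub>v col ?V j = 0\<^sub>v k \<longleftrightarrow> col ?V j = 0\<^sub>v k"
    proof
      assume "?B *\<^sub>v col ?V j = 0\<^sub>v k" thus "col ?V j = 0\<^sub>v k" by (rule invertible_inj[OF B Bi cv])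
    next
      assume "col ?V j = 0\<^sub>v k" thus "?B *\<^sub>v col ?V j = 0\<^sub>v k" using B by simp
    qed
    thus "(col (?B * ?V) j \<noteq> 0\<^sub>v k) = (col ?V j \<noteq> 0\<^sub>v k)" using colB[OF j] by simp
  qed
  note c' = c[unfolded condA_def Let_def dy dX]
  have mono: "strict_mono_on {..t} js" and js0: "js 0 = 0" and jst: "js t < n"
    and nzset: "{j. j < n \<and> col ?V j \<noteq> 0\<^sub>v k} = js ` {..t}"
    and gaps: "\<forall>i<t. p + 1 \<le> js (Suc i) - js i"
    and tl: "int p - 1 \<le> int n - int (js t + 1)"
    and A3o: "if t = k then mrank k ?V = k
       else vspan k ((\<lambda>i. col ?V (js i)) ` {..<t}) = carrier_vec k \<and>
            vspan k ((\<lambda>i. col ?V (js i)) ` {1..t}) = carrier_vec k"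
    using c' by auto
  have jsn: "\<And>i. i \<le> t \<Longrightarrow> js i < n"
  proof -
    fix i assume i: "i \<le> t"
    show "js i < n"
    proof (cases "i = t")
      case True thus ?thesis using jst by simp
    next
      case False
      hence "js i < js t" using mono i unfolding strict_mono_on_def by simp
      thus ?thesis using jst by simp
    qed
  qed
  have img: "\<And>I. I \<subseteq> {..t} \<Longrightarrow> (\<lambda>i. col (?B * ?V) (js i)) ` I = (\<lambda>v. ?B *\<^sub>v v) ` ((\<lambda>i. col ?V (js i)) ` I)"
  proof -
    fix I assume I: "I \<subseteq> {..t}"
    have "\<And>i. i \<in> I \<Longrightarrow> col (?B * ?V) (js i) = ?B *\<^sub>v col ?V (js i)"
    proof -
      fix i assume "i \<in> I"
      hence "js i < n" using jsn I by blast
      thus "col (?B * ?V) (js i) = ?B *\<^sub>v col ?V (js i)" by (rule colB)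
    qed
    thus "(\<lambda>i. col (?B * ?V) (js i)) ` I = (\<lambda>v. ?B *\<^sub>v v) ` ((\<lambda>i. col ?V (js i)) ` I)"
      unfolding image_image by (rule image_cong[OF refl])
  qed
  have A3: "if t = k then mrank k (?B * ?V) = k
       else vspan k ((\<lambda>i. col (?B * ?V) (js i)) ` {..<t}) = carrier_vec k \<and>
            vspan k ((\<lambda>i. col (?B * ?V) (js i)) ` {1..t}) = carrier_vec k"
  proof (cases "t = k")
    case True
    hence "mrank k ?V = k" using A3o by simp
    hence "vspan k (set (cols ?V)) = carrier_vec k" by (rule rank_wide_span[OF V])
    hence "vspan k (set (cols (?B * ?V))) = carrier_vec k" by (rule span_cols_mult[OF V B Bi])
    moreover have BV: "?B * ?V \<in> carrier_mat k n" using B V by simp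
    ultimately have "mrank k (?B * ?V) = k" using span_wide_rank[OF BV] by simp
    thus ?thesis using True by simp
  next
    case False
    hence s1: "vspan k ((\<lambda>i. col ?V (js i)) ` {..<t}) = carrier_vec k"
      and s2: "vspan k ((\<lambda>i. col ?V (js i)) ` {1..t}) = carrier_vec k" using A3o by auto
    have cs: "\<And>I. (\<lambda>i. col ?V (js i)) ` I \<subseteq> carrier_vec k" using col_dim[of ?V] V by (auto simp only: carrier_matD)
    have "vspan k ((\<lambda>v. ?B *\<^sub>v v) ` ((\<lambda>i. col ?V (js i)) ` {..<t})) = carrier_vec k"
      by (rule span_image_mult[OF cs _ B Bi s1], simp)
    moreover have "vspan k ((\<lambda>v. ?B *\<^sub>v v) ` ((\<lambda>i. col ?V (js i)) ` {1..t})) = carrier_vec k"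
      by (rule span_image_mult[OF cs _ B Bi s2], simp)
    moreover have "(\<lambda>i. col (?B * ?V) (js i)) ` {..<t} = (\<lambda>v. ?B *\<^sub>v v) ` ((\<lambda>i. col ?V (js i)) ` {..<t})"
      by (rule img, auto)
    moreover have "(\<lambda>i. col (?B * ?V) (js i)) ` {1..t} = (\<lambda>v. ?B *\<^sub>v v) ` ((\<lambda>i. col ?V (js i)) ` {1..t})"
      by (rule img, auto)
    ultimately show ?thesis using False by simp
  qed
  have nzs: "{j. j < n \<and> col (?B * ?V) j \<noteq> 0\<^sub>v k} = {j. j < n \<and> col ?V j \<noteq> 0\<^sub>v k}"
    using nzeq by blast
  show ?thesis unfolding condA_def Let_def VV dy dXQ
    using mono js0 jst nzset gaps tl nzs A3 by simp
qed

definition Qc :: "nat \<Rightarrow> real \<Rightarrow> real mat" where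
  "Qc k c = mat k k (\<lambda>(a, b). if a = b then 1 else if a = 0 then c else 0)"

lemma Qc_props:
  assumes k: "1 \<le> k"
  shows "Qc k c \<in> carrier_mat k k \<and> invertible_mat (Qc k c) \<and> mrank k (Qc k c) = k
    \<and> col (Qc k c) 0 = unit_vec k 0"
proof -
  have Q: "Qc k c \<in> carrier_mat k k" unfolding Qc_def by simp
  have ut: "upper_triangular (Qc k c)" unfolding upper_triangular_def Qc_def by auto
  have "diag_mat (Qc k c) = replicate k 1" unfolding diag_mat_def Qc_def
    by (intro nth_equalityI) auto
  hence "det (Qc k c) = 1" using det_upper_triangular[OF ut Q] by simp
  hence inj: "\<forall>v\<in>carrier_vec k. Qc k c *\<^sub>v v = 0\<^sub>v k \<longrightarrow> v = 0\<^sub>v k"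
    using det_0_iff_vec_prod_zero_field[OF Q] by auto
  have "col (Qc k c) 0 = unit_vec k 0" unfolding Qc_def using k by (intro eq_vecI) auto
  thus ?thesis using Q inj_imp_invertible[OF Q inj] inj_rank_tall[OF Q inj] by simp
qed

lemma QcT_entry:
  fixes V :: "real mat"
  assumes V: "V \<in> carrier_mat k n" and a: "a < k" and j: "j < n"
  shows "(transpose_mat (Qc k c) * V) $$ (a, j) = V $$ (a, j) + (if a = 0 then 0 else c * V $$ (0, j))"
proof -
  have k0: "0 < k" using a by simp
  have "(transpose_mat (Qc k c) * V) $$ (a, j) = (\<Sum>l<k. Qc k c $$ (l, a) * V $$ (l, j))"
    using V a j unfolding Qc_def by (simp add: scalar_prod_def atLeast0LessThan)
  also have "\<dots> = (\<Sum>l<k. (if l = a then V $$ (a, j) else 0) + (if l = 0 then (if a = 0 then 0 else c * V $$ (0, j)) else 0))"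
    using a unfolding Qc_def by (intro sum.cong refl) auto
  also have "\<dots> = V $$ (a, j) + (if a = 0 then 0 else c * V $$ (0, j))"
    using a k0 by (simp add: sum.distrib sum.delta)
  finally show ?thesis .
qed


lemma part4:
  fixes X R :: "real mat"
  assumes X: "X \<in> carrier_mat n k" and rk: "mrank n X = k" and y: "y \<in> carrier_vec n"
    and c: "condA p X y t js" and tk: "k \<le> t" and k2: "2 \<le> k" and p1: "1 \<le> p"
    and R: "R \<in> carrier_mat q k" and rkR: "mrank q R = q" and kern: "kernel_ok \<kappa>" and ok: "bw_ok k b"
    and sgn: "(\<forall>i\<in>{1..t}. 0 < Vhat X y $$ (0, js i)) \<or> (\<forall>i\<in>{1..t}. Vhat X y $$ (0, js i) < 0)"
  shows "\<exists>Q\<in>carrier_mat k k. invertible_mat Q \<and> col (X * Q) 0 = col X 0 \<and> y \<notin> Nstar \<kappa> b p R (X * Q)"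
proof -
  let ?V = "Vhat X y"
  have k1: "1 \<le> k" using k2 by simp
  have vs: "vstruct n k p t js ?V" by (rule condA_vstruct[OF X rk y c tk k1 p1])
  interpret v: vstruct n k p t js ?V by (rule vs)
  have V: "?V \<in> carrier_mat k n" by (rule Vhat_carrier[OF X y])
  have "\<exists>\<sigma>::real. (\<sigma> = 1 \<or> \<sigma> = -1) \<and> (\<forall>i\<in>{1..t}. 0 < \<sigma> * ?V $$ (0, js i))"
  proof (rule disjE[OF sgn])
    assume "\<forall>i\<in>{1..t}. 0 < ?V $$ (0, js i)"
    thus ?thesis by (intro exI[of _ 1]) simp
  next
    assume "\<forall>i\<in>{1..t}. ?V $$ (0, js i) < 0"
    thus ?thesis by (intro exI[of _ "-1"]) simp
  qed
  then obtain \<sigma> :: real where sig: "\<sigma> = 1 \<or> \<sigma> = -1" and sp: "\<forall>i\<in>{1..t}. 0 < \<sigma> * ?V $$ (0, js i)"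
    by blast
  have sabs: "\<And>i. i \<in> {1..t} \<Longrightarrow> \<sigma> * ?V $$ (0, js i) = \<bar>?V $$ (0, js i)\<bar>"
    using sp sig by fastforce
  have nz0: "\<And>i. i \<in> {1..t} \<Longrightarrow> ?V $$ (0, js i) \<noteq> 0" using sp by fastforce
  have QF: "Qc k cc \<in> carrier_mat k k \<and> invertible_mat (Qc k cc) \<and> X * Qc k cc \<in> carrier_mat n k
      \<and> mrank n (X * Qc k cc) = k \<and> Vhat (X * Qc k cc) y = transpose_mat (Qc k cc) * ?V
      \<and> vstruct n k p t js (Vhat (X * Qc k cc) y) \<and> col (X * Qc k cc) 0 = col X 0" for cc
  proof -
    from Qc_props[OF k1] have Q: "Qc k cc \<in> carrier_mat k k" and Qi: "invertible_mat (Qc k cc)"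
      and Q0: "col (Qc k cc) 0 = unit_vec k 0" by auto
    from XQ_facts[OF X rk y Q Qi] have XQ: "X * Qc k cc \<in> carrier_mat n k"
      and rkQ: "mrank n (X * Qc k cc) = k" and VV: "Vhat (X * Qc k cc) y = transpose_mat (Qc k cc) * ?V" by auto
    have cQ: "condA p (X * Qc k cc) y t js" by (rule condA_transfer[OF X rk y Q Qi c])
    have vsQ: "vstruct n k p t js (Vhat (X * Qc k cc) y)" by (rule condA_vstruct[OF XQ rkQ y cQ tk k1 p1])
    have "col (X * Qc k cc) 0 = X *\<^sub>v col (Qc k cc) 0" by (rule col_mult2[OF X Q], use k1 in simp)
    also have "\<dots> = col X 0" using Q0 mult_unit_vec_col[OF X, of 0] k1 by simp
    finally show ?thesis using Q Qi XQ rkQ VV vsQ by simp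
  qed
  have gen: "\<exists>Q\<in>carrier_mat k k. invertible_mat Q \<and> col (X * Q) 0 = col X 0 \<and> y \<notin> Nstar \<kappa> b p R (X * Q)"
    if bwc: "\<exists>M. bw_val b n (Vp_mat p (transpose_mat (Qc k cc) * ?V)) = Some M \<and> 0 \<le> M" for cc
  proof -
    from QF[of cc] have Q: "Qc k cc \<in> carrier_mat k k" and Qi: "invertible_mat (Qc k cc)"
      and XQ: "X * Qc k cc \<in> carrier_mat n k" and rkQ: "mrank n (X * Qc k cc) = k"
      and VV: "Vhat (X * Qc k cc) y = transpose_mat (Qc k cc) * ?V"
      and vsQ: "vstruct n k p t js (Vhat (X * Qc k cc) y)" and c0: "col (X * Qc k cc) 0 = col X 0" by auto
    obtain M where bM: "bw_val b n (Vp_mat p (Vhat (X * Qc k cc) y)) = Some M" and M: "0 \<le> M"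
      using bwc VV by auto
    have "y \<notin> Nstar \<kappa> b p R (X * Qc k cc)" by (rule Omega_ok[OF XQ rkQ y vsQ R rkR kern bM M])
    thus ?thesis using Q Qi c0 by blast
  qed
  have t2: "2 \<le> t" using tk k2 by simp
  have js1: "p + 1 \<le> js 1" "js 1 + p + 1 \<le> js t"
  proof -
    have "js 0 + p + 1 \<le> js 1" by (rule v.sep2, insert t2 v.mono, auto simp: strict_mono_on_def)
    thus "p + 1 \<le> js 1" using v.js0 by simp
    show "js 1 + p + 1 \<le> js t" by (rule v.sep2, insert t2 v.mono, auto simp: strict_mono_on_def)
  qed
  have jstn: "js t < n" by (rule v.jst)
  show ?thesis
  proof (cases b)
    case (BW_KV c0)
    have "0 < c0" using ok BW_KV by simp
    thus ?thesis using gen[of 0] BW_KV by simp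
  next
    case (BW_AM \<omega> c1 c2 jsel)
    let ?v0 = "?V $$ (0, js 1)"
    let ?cc = "(\<Sum>a<k. \<bar>?V $$ (a, js 1)\<bar>) / \<bar>?v0\<bar> + 1"
    have v0: "?v0 \<noteq> 0" using nz0[of 1] t2 by simp
    have vsQ: "vstruct n k p t js (transpose_mat (Qc k ?cc) * ?V)" using QF[of ?cc] by metis
    have Q: "Qc k ?cc \<in> carrier_mat k k" using QF[of ?cc] by blast
    have QV: "transpose_mat (Qc k ?cc) * ?V \<in> carrier_mat k n" using Q V by simp
    have rows: "\<forall>a<k. \<exists>j<dim_col (Vp_mat p (transpose_mat (Qc k ?cc) * ?V)) - 1.
        Vp_mat p (transpose_mat (Qc k ?cc) * ?V) $$ (a, j) \<noteq> 0"
    proof (intro allI impI)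
      fix a assume a: "a < k"
      let ?j = "js 1 - p"
      have dcol: "dim_col (Vp_mat p (transpose_mat (Qc k ?cc) * ?V)) = n - p"
        using vstruct.Vp_carrier[OF vsQ] by simp
      have j: "?j < n - p" "?j < n - p - 1" using js1 jstn by auto
      have j1: "js 1 < n" using js1 jstn by simp
      have "Vp_mat p (transpose_mat (Qc k ?cc) * ?V) $$ (a, ?j) = (transpose_mat (Qc k ?cc) * ?V) $$ (a, ?j + p)"
        using vstruct.Vp_index[OF vsQ a j(1)] .
      also have "?j + p = js 1" using js1 by simp
      also have "(transpose_mat (Qc k ?cc) * ?V) $$ (a, js 1) = ?V $$ (a, js 1) + (if a = 0 then 0 else ?cc * ?v0)"
        by (rule QcT_entry[OF V a j1])
      finally have e: "Vp_mat p (transpose_mat (Qc k ?cc) * ?V) $$ (a, ?j) = ?V $$ (a, js 1) + (if a = 0 then 0 else ?cc * ?v0)" .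
      have "?V $$ (a, js 1) + (if a = 0 then 0 else ?cc * ?v0) \<noteq> 0"
      proof (cases "a = 0")
        case True thus ?thesis using v0 by simp
      next
        case False
        have le: "\<bar>?V $$ (a, js 1)\<bar> \<le> (\<Sum>a<k. \<bar>?V $$ (a, js 1)\<bar>)"
          by (rule member_le_sum, insert a, auto)
        have pos: "0 < \<bar>?v0\<bar>" using v0 by simp
        have "\<bar>?cc * ?v0\<bar> = ?cc * \<bar>?v0\<bar>"
        proof -
          have "0 \<le> (\<Sum>a<k. \<bar>?V $$ (a, js 1)\<bar>)" by (rule sum_nonneg) simp
          hence "0 \<le> ?cc" using pos by simp
          thus ?thesis by (simp add: abs_mult)
        qed
        also have "\<dots> = (\<Sum>a<k. \<bar>?V $$ (a, js 1)\<bar>) + \<bar>?v0\<bar>" using pos by (simp add: field_simps)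
        finally have "\<bar>?cc * ?v0\<bar> > \<bar>?V $$ (a, js 1)\<bar>" using le pos by linarith
        thus ?thesis using False by auto
      qed
      thus "\<exists>j<dim_col (Vp_mat p (transpose_mat (Qc k ?cc) * ?V)) - 1.
        Vp_mat p (transpose_mat (Qc k ?cc) * ?V) $$ (a, j) \<noteq> 0"
        using e j dcol by auto
    qed
    have "\<exists>M. bw_val b n (Vp_mat p (transpose_mat (Qc k ?cc) * ?V)) = Some M \<and> 0 \<le> M"
      by (rule vstruct.am_val[OF vsQ BW_AM ok rows])
    thus ?thesis by (rule gen)
  next
    case (BW_NW w \<omega> c1 c2 c3)
    have wok: "weights_ok k \<omega>" using ok BW_NW by simp
    hence wc: "\<omega> \<in> carrier_vec k" and wnn: "\<forall>a<k. 0 \<le> \<omega> $ a" unfolding weights_ok_def by auto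
    let ?s = "\<Sum>a<k. if a = 0 then 0 else \<omega> $ a"
    let ?W = "\<lambda>c'. \<Sum>a<k. \<omega> $ a * ?V $$ (a, c')"
    let ?cc = "\<Sum>i\<in>{1..t}. \<bar>?W (js i)\<bar> / (?s * \<bar>?V $$ (0, js i)\<bar>)"
    have vsQ: "vstruct n k p t js (transpose_mat (Qc k ?cc) * ?V)" using QF[of ?cc] by metis
    have Q: "Qc k ?cc \<in> carrier_mat k k" using QF[of ?cc] by blast
    have QV: "transpose_mat (Qc k ?cc) * ?V \<in> carrier_mat k n" using Q V by simp
    let ?Z = "Vp_mat p (transpose_mat (Qc k ?cc) * ?V)"
    have Z: "?Z \<in> carrier_mat k (n - p)" by (rule vstruct.Vp_carrier[OF vsQ])
    have snn: "0 \<le> ?s" by (rule sum_nonneg, insert wnn, auto)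
    have val: "\<omega> \<bullet> col ?Z j = ?W (j + p) + ?cc * ?V $$ (0, j + p) * ?s" if j: "j < n - p" for j
    proof -
      have "\<omega> \<bullet> col ?Z j = (\<Sum>a<k. \<omega> $ a * ?Z $$ (a, j))"
        using Z wc j by (simp add: scalar_prod_def atLeast0LessThan)
      also have "\<dots> = (\<Sum>a<k. \<omega> $ a * (?V $$ (a, j + p) + (if a = 0 then 0 else ?cc * ?V $$ (0, j + p))))"
      proof (rule sum.cong[OF refl])
        fix a assume a: "a \<in> {..<k}"
        have "?Z $$ (a, j) = (transpose_mat (Qc k ?cc) * ?V) $$ (a, j + p)"
          using vstruct.Vp_index[OF vsQ _ j] a by simp
        also have "\<dots> = ?V $$ (a, j + p) + (if a = 0 then 0 else ?cc * ?V $$ (0, j + p))"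
          by (rule QcT_entry[OF V], insert a j, auto)
        finally show "\<omega> $ a * ?Z $$ (a, j) = \<omega> $ a * (?V $$ (a, j + p) + (if a = 0 then 0 else ?cc * ?V $$ (0, j + p)))"
          by simp
      qed
      also have "\<dots> = (\<Sum>a<k. \<omega> $ a * ?V $$ (a, j + p) + ?cc * ?V $$ (0, j + p) * (if a = 0 then 0 else \<omega> $ a))"
        by (rule sum.cong[OF refl]) (auto simp: algebra_simps)
      also have "\<dots> = ?W (j + p) + ?cc * ?V $$ (0, j + p) * ?s"
        by (simp add: sum.distrib sum_distrib_left)
      finally show ?thesis .
    qed
    have signed: "0 \<le> \<sigma> * (\<omega> \<bullet> col ?Z j)" if j: "j < n - p" for j
    proof -
      let ?c' = "j + p"
      have c'n: "?c' < n" using j by simp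
      show ?thesis
      proof (cases "?c' \<in> js ` {..t}")
        case False
        have "\<forall>a<k. ?V $$ (a, ?c') = 0" using v.zero_entry[OF _ c'n False] by blast
        thus ?thesis using val[OF j] k1 by simp
      next
        case True
        then obtain i where i: "i \<le> t" "?c' = js i" by auto
        have "i \<noteq> 0"
        proof
          assume "i = 0"
          hence "j + p = 0" using i v.js0 by simp
          thus False using p1 by simp
        qed
        hence it: "i \<in> {1..t}" using i by simp
        let ?v = "?V $$ (0, js i)"
        have sv: "\<sigma> * ?v = \<bar>?v\<bar>" by (rule sabs[OF it])
        have vpos: "0 < \<bar>?v\<bar>" using nz0[OF it] by simp
        have "0 \<le> \<sigma> * ?W (js i) + ?cc * ?s * \<bar>?v\<bar>"
        proof (cases "?s = 0")
          case True
          have z: "\<forall>a\<in>{..<k}. (if a = 0 then 0 else \<omega> $ a) = 0"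
            using True sum_nonneg_eq_0_iff[of "{..<k}" "\<lambda>a. if a = 0 then 0 else \<omega> $ a"] wnn by auto
          have "?W (js i) = (\<Sum>a<k. if a = 0 then \<omega> $ 0 * ?v else 0)"
          proof (rule sum.cong[OF refl])
            fix a assume a: "a \<in> {..<k}"
            show "\<omega> $ a * ?V $$ (a, js i) = (if a = 0 then \<omega> $ 0 * ?v else 0)"
            proof (cases "a = 0")
              case False
              have za: "(if a = 0 then 0 else \<omega> $ a) = 0" using z a by blast
              hence "\<omega> $ a = 0" using False by simp
              thus ?thesis using False by simp
            qed simp
          qed
          also have "\<dots> = \<omega> $ 0 * ?v" using k1 by (simp add: sum.delta)
          finally have "\<sigma> * ?W (js i) = \<omega> $ 0 * \<bar>?v\<bar>" using sv by (simp add: algebra_simps)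
          moreover have "0 \<le> \<omega> $ 0" using wnn k1 by simp
          ultimately show ?thesis using True by simp
        next
          case False
          hence spos: "0 < ?s" using snn by simp
          have "\<bar>?W (js i)\<bar> / (?s * \<bar>?v\<bar>) \<le> ?cc"
            by (rule member_le_sum[OF it], insert snn, auto intro!: divide_nonneg_nonneg)
          hence "\<bar>?W (js i)\<bar> \<le> ?cc * (?s * \<bar>?v\<bar>)" using spos vpos by (simp add: divide_le_eq)
          moreover have "- \<bar>?W (js i)\<bar> \<le> \<sigma> * ?W (js i)" using sig by auto
          ultimately show ?thesis by (simp add: algebra_simps)
        qed
        moreover have "\<sigma> * (\<omega> \<bullet> col ?Z j) = \<sigma> * ?W (js i) + ?cc * ?s * \<bar>?v\<bar>"
          using val[OF j] i sv by (simp add: algebra_simps)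
        ultimately show ?thesis by simp
      qed
    qed
    have dZ: "dim_col ?Z = n - p" using Z by simp
    have sgnZ: "(\<forall>j<dim_col ?Z. 0 \<le> \<omega> \<bullet> col ?Z j) \<or> (\<forall>j<dim_col ?Z. \<omega> \<bullet> col ?Z j \<le> 0)"
    proof (cases "\<sigma> = 1")
      case True thus ?thesis using signed dZ by auto
    next
      case False
      hence "\<sigma> = -1" using sig by simp
      thus ?thesis using signed dZ by fastforce
    qed
    have "\<exists>M. bw_val b n ?Z = Some M \<and> 0 \<le> M"
      by (rule vstruct.nw_val[OF vsQ BW_NW ok sgnZ])
    thus ?thesis by (rule gen)
  qed
qed

lemma Ahat_Zhat:
  fixes X :: "real mat"
  assumes vs: "vstruct n k p t js (Vhat X y)"
  shows "Ahat p X y = Some (0\<^sub>m k (k * p)) \<and> Zhat p X y = Some (Vp_mat p (Vhat X y))"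
proof -
  interpret vstruct n k p t js "Vhat X y" by (rule vs)
  have Ah: "Ahat p X y = Some (0\<^sub>m k (k * p))" unfolding Ahat_def Let_def using Ahat_zero_V by simp
  have Z1: "0\<^sub>m k (k * p) * V1_mat p (Vhat X y) = 0\<^sub>m k (n - p)" using V1_carrier by simp
  have Z2: "Vp_mat p (Vhat X y) - 0\<^sub>m k (n - p) = Vp_mat p (Vhat X y)"
    by (rule eq_matI, insert Vp_carrier, auto)
  show ?thesis unfolding Zhat_def Ah using Z1 Z2 by simp
qed

theorem lemmaA1:
  fixes \<kappa> :: "real \<Rightarrow> real" and b :: bandwidth and n k p q t :: nat
    and R X :: "real mat" and r y :: "real vec" and js :: "nat \<Rightarrow> nat"
  assumes n_gt: "2 < n" and k_ge: "1 \<le> k" and k_lt: "k < n"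
    and R_dim: "R \<in> carrier_mat q k" and q_ge: "1 \<le> q" and R_rank: "mrank q R = q"
    and r_dim: "r \<in> carrier_vec q"
    and A: "assumptionA n k \<kappa> b p"
    and X: "X \<in> design0 n k" and y: "y \<in> carrier_vec n"
    and t_ge: "k \<le> t"
    and A123: "condA p X y t js"
  shows
    \<comment> \<open>1.\<close>
    "Ahat p X y = Some (0\<^sub>m k (k * p))
     \<comment> \<open>2. (CKV)\<close>
     \<and> ((\<exists>c. b = BW_KV c) \<longrightarrow> y \<notin> Nstar \<kappa> b p R X)
     \<comment> \<open>2. (CAM)\<close>
     \<and> ((\<exists>\<omega> c1 c2 j. b = BW_AM \<omega> c1 c2 j) \<and>
          (\<exists>Z. Zhat p X y = Some Z \<and> (\<forall>i<k. \<exists>j<dim_col Z - 1. Z $$ (i, j) \<noteq> 0))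
        \<longrightarrow> y \<notin> Nstar \<kappa> b p R X)
     \<comment> \<open>2. the parenthetical sufficient condition for (CAM)\<close>
     \<and> (int p - 1 < int n - int (js t + 1) \<longrightarrow>
          (\<exists>Z. Zhat p X y = Some Z \<and> (\<forall>i<k. \<exists>j<dim_col Z - 1. Z $$ (i, j) \<noteq> 0)))
     \<comment> \<open>2. (CNW)\<close>
     \<and> (\<forall>w \<omega> c1 c2 c3. b = BW_NW w \<omega> c1 c2 c3 \<and>
          (\<exists>Z. Zhat p X y = Some Z \<and>
             ((\<forall>j<dim_col Z. 0 \<le> \<omega> \<bullet> col Z j) \<or> (\<forall>j<dim_col Z. \<omega> \<bullet> col Z j \<le> 0)))
        \<longrightarrow> y \<notin> Nstar \<kappa> b p R X)
     \<comment> \<open>3.\<close>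
     \<and> (\<forall>Q \<in> carrier_mat k k. mrank k Q = k \<longrightarrow>
          X * Q \<in> design0 n k \<and> condA p (X * Q) y t js)
     \<comment> \<open>4.\<close>
     \<and> (2 \<le> k \<and> ((\<forall>i\<in>{1..t}. 0 < Vhat X y $$ (0, js i)) \<or> (\<forall>i\<in>{1..t}. Vhat X y $$ (0, js i) < 0))
        \<longrightarrow> (\<exists>Q \<in> carrier_mat k k. invertible_mat Q \<and> col (X * Q) 0 = col X 0 \<and>
               y \<notin> Nstar \<kappa> b p R (X * Q)))"
proof -
  have kern: "kernel_ok \<kappa>" and ok: "bw_ok k b" and p1: "1 \<le> p"
    using A unfolding assumptionA_def by auto
  have Xc: "X \<in> carrier_mat n k" and rk: "mrank n X = k" using X unfolding design0_def by auto
  have vs: "vstruct n k p t js (Vhat X y)" by (rule condA_vstruct[OF Xc rk y A123 t_ge k_ge p1])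
  interpret v: vstruct n k p t js "Vhat X y" by (rule vs)
  from Ahat_Zhat[OF vs] have Ah: "Ahat p X y = Some (0\<^sub>m k (k * p))"
    and Zh: "Zhat p X y = Some (Vp_mat p (Vhat X y))" by auto
  have P1: "(\<exists>c. b = BW_KV c) \<longrightarrow> y \<notin> Nstar \<kappa> b p R X"
  proof
    assume "\<exists>c. b = BW_KV c"
    then obtain c where bc: "b = BW_KV c" by blast
    have "0 \<le> c" using ok bc by simp
    moreover have "bw_val b n (Vp_mat p (Vhat X y)) = Some c" using bc by simp
    ultimately show "y \<notin> Nstar \<kappa> b p R X" using Omega_ok[OF Xc rk y vs R_dim R_rank kern] by blast
  qed
  have P2: "(\<exists>\<omega> c1 c2 j. b = BW_AM \<omega> c1 c2 j) \<and>
          (\<exists>Z. Zhat p X y = Some Z \<and> (\<forall>i<k. \<exists>j<dim_col Z - 1. Z $$ (i, j) \<noteq> 0))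
        \<longrightarrow> y \<notin> Nstar \<kappa> b p R X"
  proof
    assume h: "(\<exists>\<omega> c1 c2 j. b = BW_AM \<omega> c1 c2 j) \<and>
          (\<exists>Z. Zhat p X y = Some Z \<and> (\<forall>i<k. \<exists>j<dim_col Z - 1. Z $$ (i, j) \<noteq> 0))"
    then obtain \<omega> c1 c2 jsel where bc: "b = BW_AM \<omega> c1 c2 jsel" by blast
    have rows: "\<forall>i<k. \<exists>j<dim_col (Vp_mat p (Vhat X y)) - 1. Vp_mat p (Vhat X y) $$ (i, j) \<noteq> 0"
      using h Zh by auto
    from v.am_val[OF bc ok rows] obtain M where "bw_val b n (Vp_mat p (Vhat X y)) = Some M" "0 \<le> M" by blast
    thus "y \<notin> Nstar \<kappa> b p R X" using Omega_ok[OF Xc rk y vs R_dim R_rank kern] by blast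
  qed
  have P3: "int p - 1 < int n - int (js t + 1) \<longrightarrow>
          (\<exists>Z. Zhat p X y = Some Z \<and> (\<forall>i<k. \<exists>j<dim_col Z - 1. Z $$ (i, j) \<noteq> 0))"
  proof
    assume "int p - 1 < int n - int (js t + 1)"
    hence "js t + p < n" by linarith
    from v.rows_nonzero[OF this] show "\<exists>Z. Zhat p X y = Some Z \<and> (\<forall>i<k. \<exists>j<dim_col Z - 1. Z $$ (i, j) \<noteq> 0)"
      using Zh by blast
  qed
  have P4: "\<forall>w \<omega> c1 c2 c3. b = BW_NW w \<omega> c1 c2 c3 \<and>
          (\<exists>Z. Zhat p X y = Some Z \<and>
             ((\<forall>j<dim_col Z. 0 \<le> \<omega> \<bullet> col Z j) \<or> (\<forall>j<dim_col Z. \<omega> \<bullet> col Z j \<le> 0)))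
        \<longrightarrow> y \<notin> Nstar \<kappa> b p R X"
  proof (intro allI impI)
    fix w \<omega> c1 c2 c3
    assume h: "b = BW_NW w \<omega> c1 c2 c3 \<and>
          (\<exists>Z. Zhat p X y = Some Z \<and>
             ((\<forall>j<dim_col Z. 0 \<le> \<omega> \<bullet> col Z j) \<or> (\<forall>j<dim_col Z. \<omega> \<bullet> col Z j \<le> 0)))"
    hence bc: "b = BW_NW w \<omega> c1 c2 c3" by simp
    have sg: "(\<forall>j<dim_col (Vp_mat p (Vhat X y)). 0 \<le> \<omega> \<bullet> col (Vp_mat p (Vhat X y)) j) \<or>
        (\<forall>j<dim_col (Vp_mat p (Vhat X y)). \<omega> \<bullet> col (Vp_mat p (Vhat X y)) j \<le> 0)"
      using h Zh by auto
    from v.nw_val[OF bc ok sg] obtain M where "bw_val b n (Vp_mat p (Vhat X y)) = Some M" "0 \<le> M" by blast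
    thus "y \<notin> Nstar \<kappa> b p R X" using Omega_ok[OF Xc rk y vs R_dim R_rank kern] by blast
  qed
  have P5: "\<forall>Q \<in> carrier_mat k k. mrank k Q = k \<longrightarrow> X * Q \<in> design0 n k \<and> condA p (X * Q) y t js"
  proof (intro ballI impI)
    fix Q :: "real mat" assume Q: "Q \<in> carrier_mat k k" and rQ: "mrank k Q = k"
    have "\<forall>v\<in>carrier_vec k. Q *\<^sub>v v = 0\<^sub>v k \<longrightarrow> v = 0\<^sub>v k" using rank_tall_inj[OF Q rQ] by blast
    hence Qi: "invertible_mat Q" by (rule inj_imp_invertible[OF Q])
    from XQ_facts[OF Xc rk y Q Qi] have "X * Q \<in> design0 n k" unfolding design0_def by simp
    moreover have "condA p (X * Q) y t js" by (rule condA_transfer[OF Xc rk y Q Qi A123])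
    ultimately show "X * Q \<in> design0 n k \<and> condA p (X * Q) y t js" by simp
  qed
  have P6: "2 \<le> k \<and> ((\<forall>i\<in>{1..t}. 0 < Vhat X y $$ (0, js i)) \<or> (\<forall>i\<in>{1..t}. Vhat X y $$ (0, js i) < 0))
        \<longrightarrow> (\<exists>Q \<in> carrier_mat k k. invertible_mat Q \<and> col (X * Q) 0 = col X 0 \<and>
               y \<notin> Nstar \<kappa> b p R (X * Q))"
  proof
    assume h: "2 \<le> k \<and> ((\<forall>i\<in>{1..t}. 0 < Vhat X y $$ (0, js i)) \<or> (\<forall>i\<in>{1..t}. Vhat X y $$ (0, js i) < 0))"
    show "\<exists>Q \<in> carrier_mat k k. invertible_mat Q \<and> col (X * Q) 0 = col X 0 \<and> y \<notin> Nstar \<kappa> b p R (X * Q)"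
      by (rule part4[OF Xc rk y A123 t_ge _ p1 R_dim R_rank kern ok], use h in auto)
  qed
  show ?thesis using Ah P1 P2 P3 P4 P5 P6 by blast
qed

end
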